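(* Let $\tau>1$. For every integer $\kappa\ge3$, $$\sup_{\substack{x^\dagger\in\mathcal X\\ \bar k^\delta_{\mathrm{pr}}(x^\dagger)\ge\kappa}}\mathbb P\Big(k^\delta_{\mathrm{dp}}<\infty\ \text{and}\ \|K(x^\delta_{k^\delta_{\mathrm{dp}}}-x^\dagger)\|\le C_\tau\min_{k\in\mathbb N_0}\|K(x^\delta_k-x^\dagger)\|\Big)\ \ge\ 1-\max\Big(\frac{12}{\tau^2+2\tau-3},9\Big)\,\mathbb E\Big[\Big|\frac1\kappa\sum_{j=1}^{\lceil\kappa/3\rceil}\big((Z,u_j)^2-1\big)\Big|\Big],$$ and the right-hand side tends to $1$ as $\kappa\to\infty$. Here $C_\tau:=\sqrt6\sqrt{\tfrac32(A_\tau+1)+B_\tau}$ with $A_\tau:=\big(\frac{\tau+1}{\tau-1}\big)^2$ and $B_\tau:=\frac{(3\tau+1)^2}{4}$. (Written "$\inf$" interpretation: the inequality holds for every $x^\dagger$ with $\bar k^\delta_{\mathrm{pr}}(x^\dagger)\ge\kappa$, uniformly in $\delta>0$.)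
   Context: Let $\mathcal X,\mathcal Y$ be infinite-dimensional real separable Hilbert spaces and $K:\mathcal X\to\mathcal Y$ a compact injective linear operator with dense range, with singular system $(\sigma_j,v_j,u_j)_{j\in\mathbb N}$: $(v_j)$, $(u_j)$ orthonormal bases of $\mathcal X$, $\mathcal Y$, $\sigma_1\ge\sigma_2\ge\dots>0$, $\sigma_j\to0$, $Kv_j=\sigma_ju_j$, $K^*u_j=\sigma_jv_j$. For $x^\dagger\in\mathcal X$ put $y^\dagger=Kx^\dagger$; $\delta>0$ is the noise level. The white noise $Z$ is a family of real random variables $(Z,y)$, $y\in\mathcal Y$, with $\mathbb E[(Z,y)]=0$, $\mathbb E[(Z,y)(Z,y')]=(y,y')$, $(Z,y)\overset{d}{=}\frac{\|y\|}{\|y'\|}(Z,y')$ ($y'\neq0$), and $(Z,u_j)$, $j\in\mathbb N$, independent. Data components: $(y^\delta,u_j):=(y^\dagger,u_j)+\delta(Z,u_j)$. Spectral cut-off: $x_k^\delta:=\sum_{j=1}^k\frac{(y^\delta,u_j)}{\sigma_j}v_j$, $k\in\mathbb N_0$. Modified discrepancy principle with parameter $\tau>1$: for $m\in\mathbb N$, $$k^\delta_{\mathrm{dp}}(m):=\min\Big\{k\in\{0,\dots,m\}:\ \sqrt{\textstyle\sum_{j=k+1}^m(y^\delta,u_j)^2}\le\tau\sqrt m\,\delta\Big\},\qquad k^\delta_{\mathrm{dp}}:=\sup_{m\in\mathbb N}k^\delta_{\mathrm{dp}}(m)\in\mathbb N_0\cup\{\infty\}.$$ The deterministic balancing index is $$\bar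 k^\delta_{\mathrm{pr}}(x^\dagger):=\min\Big\{k\in\mathbb N_0:\ \delta^2k\ge\sum_{j=k+1}^\infty(y^\dagger,u_j)^2\Big\}.$$ *)

theory Defs
  imports "HOL-Probability.Probability"
begin

text \<open>Coordinates w.r.t. the singular system (indices j \<ge> 1):
  a j = (x\<dagger>, v_j),  sv j = \<sv>_j,  Z j \<omega> = (Z,u_j)(\<omega>).
  Then (y\<dagger>,u_j) = sv j * a j, and (y\<delta>,u_j) = sv j * a j + \<delta> * Z j \<omega>.\<close>

definition ydag :: "(nat \<Rightarrow> real) \<Rightarrow> (nat \<Rightarrow> real) \<Rightarrow> nat \<Rightarrow> real" where
  "ydag sv a j = sv j * a j"

definition ydelta :: "(nat \<Rightarrow> real) \<Rightarrow> (nat \<Rightarrow> real) \<Rightarrow> real \<Rightarrow> (nat \<Rightarrow> 'w \<Rightarrow> real) \<Rightarrow> 'w \<Rightarrow> nat \<Rightarrow> real" where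
  "ydelta sv a \<delta> Z \<omega> j = ydag sv a j + \<delta> * Z j \<omega>"

text \<open>Coefficients (x_k^\<delta>, v_j) of the spectral cut-off solution.\<close>
definition xcut :: "(nat \<Rightarrow> real) \<Rightarrow> (nat \<Rightarrow> real) \<Rightarrow> real \<Rightarrow> (nat \<Rightarrow> 'w \<Rightarrow> real) \<Rightarrow> 'w \<Rightarrow> nat \<Rightarrow> nat \<Rightarrow> real" where
  "xcut sv a \<delta> Z \<omega> k j = (if 1 \<le> j \<and> j \<le> k then ydelta sv a \<delta> Z \<omega> j / sv j else 0)"

text \<open>\<parallel>K(x_k^\<delta> - x\<dagger>)\<parallel>, computed by Parseval in the basis (u_j):
  (K x, u_j) = sv j * (x, v_j).\<close>
definition err :: "(nat \<Rightarrow> real) \<Rightarrow> (nat \<Rightarrow> real) \<Rightarrow> real \<Rightarrow> (nat \<Rightarrow> 'w \<Rightarrow> real) \<Rightarrow> 'w \<Rightarrow> nat \<Rightarrow> real" where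
  "err sv a \<delta> Z \<omega> k =
     sqrt (infsum (\<lambda>j. (sv j * (xcut sv a \<delta> Z \<omega> k j - a j))\<^sup>2) {1..})"

definition kdp_m :: "real \<Rightarrow> (nat \<Rightarrow> real) \<Rightarrow> (nat \<Rightarrow> real) \<Rightarrow> real \<Rightarrow> (nat \<Rightarrow> 'w \<Rightarrow> real) \<Rightarrow> 'w \<Rightarrow> nat \<Rightarrow> nat" where
  "kdp_m \<tau> sv a \<delta> Z \<omega> m =
     (LEAST k. k \<le> m \<and>
        sqrt (\<Sum>j\<in>{k<..m}. (ydelta sv a \<delta> Z \<omega> j)\<^sup>2) \<le> \<tau> * sqrt (real m) * \<delta>)"

definition kdp :: "real \<Rightarrow> (nat \<Rightarrow> real) \<Rightarrow> (nat \<Rightarrow> real) \<Rightarrow> real \<Rightarrow> (nat \<Rightarrow> 'w \<Rightarrow> real) \<Rightarrow> 'w \<Rightarrow> enat" where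
  "kdp \<tau> sv a \<delta> Z \<omega> = (SUP m\<in>{1..}. enat (kdp_m \<tau> sv a \<delta> Z \<omega> m))"

definition kpr :: "(nat \<Rightarrow> real) \<Rightarrow> (nat \<Rightarrow> real) \<Rightarrow> real \<Rightarrow> nat" where
  "kpr sv a \<delta> = (LEAST k. \<delta>\<^sup>2 * real k \<ge> infsum (\<lambda>j. (ydag sv a j)\<^sup>2) {k<..})"

definition A_tau :: "real \<Rightarrow> real" where "A_tau \<tau> = ((\<tau> + 1) / (\<tau> - 1))\<^sup>2"
definition B_tau :: "real \<Rightarrow> real" where "B_tau \<tau> = (3 * \<tau> + 1)\<^sup>2 / 4"
definition C_tau :: "real \<Rightarrow> real" where
  "C_tau \<tau> = sqrt 6 * sqrt (3 / 2 * (A_tau \<tau> + 1) + B_tau \<tau>)"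

definition rhs :: "'w measure \<Rightarrow> (nat \<Rightarrow> 'w \<Rightarrow> real) \<Rightarrow> real \<Rightarrow> nat \<Rightarrow> real" where
  "rhs M Z \<tau> \<kappa> = 1 - max (12 / (\<tau>\<^sup>2 + 2 * \<tau> - 3)) 9 *
     (\<integral>\<omega>. \<bar>(1 / real \<kappa>) * (\<Sum>j=1..nat \<lceil>real \<kappa> / 3\<rceil>. ((Z j \<omega>)\<^sup>2 - 1))\<bar> \<partial>M)"

end

theory Submission
  imports Defs
begin


lemma ydag_summable:
  assumes sv_pos: "\<And>j. j \<ge> 1 \<Longrightarrow> sv j > 0"
    and sv_mono: "\<And>i j. 1 \<le> i \<Longrightarrow> i \<le> j \<Longrightarrow> sv j \<le> sv i"
    and a: "(\<lambda>j. (a j)\<^sup>2) summable_on {1..}"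
  shows "(\<lambda>j. (ydag sv a j)\<^sup>2) summable_on {1..}"
proof -
  have "(\<lambda>j. (sv 1)\<^sup>2 * (a j)\<^sup>2) summable_on {1..}" using a by (rule summable_on_cmult_right)
  then show ?thesis
  proof (rule summable_on_comparison_test)
    fix j :: nat assume j: "j \<in> {1..}"
    have "(sv j)\<^sup>2 \<le> (sv 1)\<^sup>2" using sv_pos[of j] sv_mono[of 1 j] j by (auto intro!: power_mono)
    then show "(ydag sv a j)\<^sup>2 \<le> (sv 1)\<^sup>2 * (a j)\<^sup>2"
      by (simp add: ydag_def power_mult_distrib mult_right_mono)
  qed simp
qed

lemma tail_summable:
  assumes "(\<lambda>j. (ydag sv a j)\<^sup>2) summable_on {1..}"
  shows "(\<lambda>j. (ydag sv a j)\<^sup>2) summable_on {k<..}"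
  by (rule summable_on_subset[OF assms]) auto

lemma tail_split:
  assumes "(\<lambda>j. (ydag sv a j)\<^sup>2) summable_on {1..}" and "k \<le> m"
  shows "infsum (\<lambda>j. (ydag sv a j)\<^sup>2) {k<..} =
     (\<Sum>j\<in>{k<..m}. (ydag sv a j)\<^sup>2) + infsum (\<lambda>j. (ydag sv a j)\<^sup>2) {m<..}"
proof -
  have "{k<..} = {k<..m} \<union> {m<..}" using assms(2) by auto
  moreover have "(\<lambda>j. (ydag sv a j)\<^sup>2) summable_on {m<..}" by (rule tail_summable[OF assms(1)])
  then have "infsum (\<lambda>j. (ydag sv a j)\<^sup>2) ({k<..m} \<union> {m<..}) = infsum (\<lambda>j. (ydag sv a j)\<^sup>2) {k<..m} + infsum (\<lambda>j. (ydag sv a j)\<^sup>2) {m<..}"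
    by (intro infsum_Un_disjoint) auto
  ultimately show ?thesis by simp
qed

lemma tail_nonneg: "infsum (\<lambda>j. (ydag sv a j)\<^sup>2) A \<ge> 0"
  by (rule infsum_nonneg) simp

lemma tail_mono:
  assumes "(\<lambda>j. (ydag sv a j)\<^sup>2) summable_on {1..}" and "k \<le> m"
  shows "infsum (\<lambda>j. (ydag sv a j)\<^sup>2) {m<..} \<le> infsum (\<lambda>j. (ydag sv a j)\<^sup>2) {k<..}"
  using tail_split[OF assms] by (simp add: sum_nonneg)

lemma err_eq:
  assumes sv_pos: "\<And>j. j \<ge> 1 \<Longrightarrow> sv j > 0"
    and s: "(\<lambda>j. (ydag sv a j)\<^sup>2) summable_on {1..}"
  shows "err sv a \<delta> Z \<omega> k = sqrt (\<delta>\<^sup>2 * (\<Sum>j=1..k. (Z j \<omega>)\<^sup>2) + infsum (\<lambda>j. (ydag sv a j)\<^sup>2) {k<..})"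
proof -
  let ?f = "\<lambda>j. (sv j * (xcut sv a \<delta> Z \<omega> k j - a j))\<^sup>2"
  have U: "{1..} = {1..k} \<union> {k<..}" by auto
  have e1: "sum ?f {1..k} = \<delta>\<^sup>2 * (\<Sum>j=1..k. (Z j \<omega>)\<^sup>2)"
    unfolding sum_distrib_left
  proof (rule sum.cong)
    fix j assume "j \<in> {1..k}"
    with sv_pos[of j] show "?f j = \<delta>\<^sup>2 * (Z j \<omega>)\<^sup>2"
      by (simp add: xcut_def ydelta_def ydag_def field_simps power_mult_distrib)
  qed simp
  have e2: "infsum ?f {k<..} = infsum (\<lambda>j. (ydag sv a j)\<^sup>2) {k<..}"
    by (rule infsum_cong) (simp add: xcut_def ydag_def power_mult_distrib)
  have "?f summable_on {k<..}"
    using tail_summable[OF s, of k] by (rule summable_on_cong[THEN iffD1, rotated])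
       (simp add: xcut_def ydag_def power_mult_distrib)
  then have "infsum ?f {1..} = sum ?f {1..k} + infsum ?f {k<..}"
    by (subst U, subst infsum_Un_disjoint) auto
  then show ?thesis unfolding err_def using e1 e2 by simp
qed



lemma sq_split_ineq:
  fixes x y \<tau> :: real assumes "\<tau> > 1"
  shows "(x + y)\<^sup>2 \<le> (2*\<tau>/(\<tau>-1)) * x\<^sup>2 + (2*\<tau>/(\<tau>+1)) * y\<^sup>2"
proof -
  define p where "p = (\<tau>+1)/(\<tau>-1)"
  have p: "p > 0" using assms by (simp add: p_def)
  have 1: "2*\<tau>/(\<tau>-1) = 1 + p" using assms by (simp add: p_def field_simps)
  have 2: "2*\<tau>/(\<tau>+1) = 1 + 1/p" using assms by (simp add: p_def field_simps)
  have "0 \<le> (p*x - y)\<^sup>2 / p" using p by simp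
  also have "(p*x - y)\<^sup>2 / p = p*x\<^sup>2 + y\<^sup>2/p - 2*x*y" using p
    by (simp add: field_simps power2_eq_square)
  finally show ?thesis unfolding 1 2 by (simp add: field_simps power2_eq_square)
qed

lemma sq_split2: "((x::real) - y)\<^sup>2 \<le> 2*x\<^sup>2 + 2*y\<^sup>2"
proof -
  have "0 \<le> (x + y)\<^sup>2" by simp
  then show ?thesis by (simp add: power2_eq_square algebra_simps)
qed



lemma det_main:
  fixes sv a :: "nat \<Rightarrow> real" and Z :: "nat \<Rightarrow> 'w \<Rightarrow> real" and \<kappa> :: nat
  assumes sv_pos: "\<And>j. j \<ge> 1 \<Longrightarrow> sv j > 0"
    and s: "(\<lambda>j. (ydag sv a j)\<^sup>2) summable_on {1..}"
    and tau: "\<tau> > 1" and dpos: "\<delta> > 0"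
    and kb: "kpr sv a \<delta> \<ge> \<kappa>" and kappa: "\<kappa> \<ge> 3"
    and e0: "0 < e" "e \<le> 1/3" "e \<le> (\<tau>\<^sup>2+2*\<tau>-3)/4"
    and good: "\<And>m. m \<ge> nat \<lceil>real \<kappa> / 3\<rceil> \<Longrightarrow> \<bar>(\<Sum>j=1..m. (Z j \<omega>)\<^sup>2) - real m\<bar> \<le> e * real m"
  shows "kdp \<tau> sv a \<delta> Z \<omega> < \<infinity> \<and>
     err sv a \<delta> Z \<omega> (the_enat (kdp \<tau> sv a \<delta> Z \<omega>)) \<le> C_tau \<tau> * (INF k. err sv a \<delta> Z \<omega> k)"
proof -
  define T where "T k = infsum (\<lambda>j. (ydag sv a j)\<^sup>2) {k<..}" for k
  define S where "S k = (\<Sum>j=1..k. (Z j \<omega>)\<^sup>2)" for k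
  define K0 where "K0 = kpr sv a \<delta>"
  define n where "n = nat \<lceil>real \<kappa> / 3\<rceil>"
  define A where "A = A_tau \<tau>"
  have T_nonneg: "T k \<ge> 0" for k unfolding T_def by (rule tail_nonneg)
  have T_split: "T k = (\<Sum>j\<in>{k<..m}. (ydag sv a j)\<^sup>2) + T m" if "k \<le> m" for k m
    unfolding T_def by (rule tail_split[OF s that])
  have T_mono: "T m \<le> T k" if "k \<le> m" for k m
    unfolding T_def by (rule tail_mono[OF s that])
  have S_nonneg: "S k \<ge> 0" for k unfolding S_def by (simp add: sum_nonneg)
  have S_mono: "S k \<le> S m" if "k \<le> m" for k m
    unfolding S_def using that by (intro sum_mono2) auto
  have S_split: "S m = S k + (\<Sum>j\<in>{k<..m}. (Z j \<omega>)\<^sup>2)" if "k \<le> m" for k m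
  proof -
    have "{1..m} = {1..k} \<union> {k<..m}" using that by auto
    moreover have "(\<Sum>j\<in>{1..k} \<union> {k<..m}. (Z j \<omega>)\<^sup>2) = (\<Sum>j\<in>{1..k}. (Z j \<omega>)\<^sup>2) + (\<Sum>j\<in>{k<..m}. (Z j \<omega>)\<^sup>2)"
      by (rule sum.union_disjoint) auto
    ultimately show ?thesis unfolding S_def by simp
  qed
  have err_eq': "err sv a \<delta> Z \<omega> k = sqrt (\<delta>\<^sup>2 * S k + T k)" for k
    unfolding S_def T_def by (rule err_eq[OF sv_pos s])
  have exP: "\<exists>k. \<delta>\<^sup>2 * real k \<ge> T k"
  proof
    define k where "k = nat \<lceil>T 0 / \<delta>\<^sup>2\<rceil>"
    have "T 0 / \<delta>\<^sup>2 \<le> real k" unfolding k_def by linarith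
    then have "T 0 \<le> \<delta>\<^sup>2 * real k" using dpos by (simp add: field_simps)
    then show "\<delta>\<^sup>2 * real k \<ge> T k" using T_mono[of 0 k] by simp
  qed
  have K0_P: "\<delta>\<^sup>2 * real K0 \<ge> T K0"
    unfolding K0_def kpr_def T_def[symmetric] using LeastI_ex[OF exP] .
  have K0_notP: "\<delta>\<^sup>2 * real k < T k" if "k < K0" for k
    using not_less_Least[OF that[unfolded K0_def kpr_def]] unfolding T_def by simp
  have K0k: "K0 \<ge> \<kappa>" using kb K0_def by simp
  have n_le: "n \<le> \<kappa>" unfolding n_def by linarith
  have n_ge: "real \<kappa> / 3 \<le> real n" unfolding n_def by linarith
  have K0_ge3: "real K0 \<ge> 3" using K0k kappa by linarith
  have gS: "\<bar>S m - real m\<bar> \<le> e * real m" if "m \<ge> n" for m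
    using good[of m] that unfolding S_def n_def by simp
  have em: "e * real m \<le> 1/3 * real m" for m using e0 by (intro mult_right_mono) auto
  have Sup: "S m \<le> 4/3 * real m" if "m \<ge> n" for m
    using gS[OF that] em[of m] unfolding abs_le_iff by linarith
  have Slo: "S m \<ge> 2/3 * real m" if "m \<ge> n" for m
    using gS[OF that] em[of m] unfolding abs_le_iff by linarith
  have Sup2: "S m \<le> (1 + e) * real m" if "m \<ge> n" for m
    using good[of m] that unfolding S_def n_def by (auto simp: abs_le_iff algebra_simps)
  have Sall: "S m \<le> 4/3 * real K0" if "m \<le> K0" for m
  proof (cases "m \<ge> n")
    case True then show ?thesis using Sup[of m] that by simp
  next
    case False then have "S m \<le> S n" by (intro S_mono) simp
    also have "\<dots> \<le> 4/3 * real n" by (rule Sup) simp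
    also have "\<dots> \<le> 4/3 * real K0" using n_le K0k by simp
    finally show ?thesis .
  qed
  define L where "L = sqrt (2/3 * \<delta>\<^sup>2 * real K0)"
  have lower: "L \<le> err sv a \<delta> Z \<omega> k" for k
  proof -
    have "2/3 * \<delta>\<^sup>2 * real K0 \<le> \<delta>\<^sup>2 * S k + T k"
    proof (cases "k \<ge> K0")
      case True
      then have "S k \<ge> 2/3 * real k" using K0k n_le by (intro Slo) simp
      moreover have "real k \<ge> real K0" using True by simp
      ultimately have "S k \<ge> 2/3 * real K0" by simp
      then have "\<delta>\<^sup>2 * S k \<ge> \<delta>\<^sup>2 * (2/3 * real K0)" by (intro mult_left_mono) auto
      then show ?thesis using T_nonneg[of k] by simp
    next
      case False
      then have "T k \<ge> T (K0 - 1)" by (intro T_mono) simp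
      moreover have "\<delta>\<^sup>2 * real (K0 - 1) < T (K0 - 1)" using K0_ge3 by (intro K0_notP) simp
      moreover have "real (K0 - 1) \<ge> 2/3 * real K0" using K0_ge3 by (simp add: of_nat_diff)
      moreover have "\<delta>\<^sup>2 * real (K0 - 1) \<ge> \<delta>\<^sup>2 * (2/3 * real K0)"
        using calculation(3) by (intro mult_left_mono) auto
      moreover have "\<delta>\<^sup>2 * S k \<ge> 0" using S_nonneg[of k] by simp
      ultimately show ?thesis by linarith
    qed
    then show ?thesis unfolding L_def err_eq' by simp
  qed
  define D where "D m k = (\<Sum>j\<in>{k<..m}. (ydelta sv a \<delta> Z \<omega> j)\<^sup>2)" for m k
  define Q where "Q m k \<longleftrightarrow> k \<le> m \<and> sqrt (D m k) \<le> \<tau> * sqrt (real m) * \<delta>" for m k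
  have kdpm_eq: "kdp_m \<tau> sv a \<delta> Z \<omega> m = (LEAST k. Q m k)" for m
    unfolding kdp_m_def Q_def D_def ..
  have Qm: "Q m m" for m unfolding Q_def D_def using tau dpos by simp
  have kdpm_Q: "Q m (kdp_m \<tau> sv a \<delta> Z \<omega> m)" for m
    unfolding kdpm_eq by (rule LeastI[of "Q m", OF Qm])
  have kdpm_le: "kdp_m \<tau> sv a \<delta> Z \<omega> m \<le> k" if "Q m k" for m k
    unfolding kdpm_eq by (rule Least_le[of "Q m", OF that])
  define Bnd where "Bnd = real K0 + 4 * real K0 / (\<tau>-1)\<^sup>2"
  have upper: "real (kdp_m \<tau> sv a \<delta> Z \<omega> m) \<le> Bnd" for m
  proof (cases "m \<ge> K0 \<and> (\<tau>-1)\<^sup>2 * real m \<ge> 4 * real K0")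
    case True
    then have mK: "K0 \<le> m" and m4: "(\<tau>-1)\<^sup>2 * real m \<ge> 4 * real K0" by auto
    have "Q m K0"
    proof -
      have "D m K0 \<le> (\<Sum>j\<in>{K0<..m}. (2*\<tau>/(\<tau>-1)) * (ydag sv a j)\<^sup>2 + (2*\<tau>/(\<tau>+1)) * (\<delta> * Z j \<omega>)\<^sup>2)"
        unfolding D_def ydelta_def by (intro sum_mono sq_split_ineq tau)
      also have "\<dots> = (2*\<tau>/(\<tau>-1)) * (T K0 - T m) + (2*\<tau>/(\<tau>+1)) * \<delta>\<^sup>2 * (S m - S K0)"
        using T_split[OF mK] S_split[OF mK]
        by (simp add: sum.distrib sum_distrib_left power_mult_distrib mult.assoc)
      also have "\<dots> \<le> (2*\<tau>/(\<tau>-1)) * (\<delta>\<^sup>2 * real K0) + (2*\<tau>/(\<tau>+1)) * \<delta>\<^sup>2 * ((\<tau>+1)\<^sup>2/4 * real m)"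
      proof (intro add_mono mult_left_mono)
        show "T K0 - T m \<le> \<delta>\<^sup>2 * real K0" using K0_P T_nonneg[of m] by simp
        have "S m \<le> (1 + e) * real m" using mK K0k n_le by (intro Sup2) simp
        moreover have "1 + e \<le> (\<tau>+1)\<^sup>2/4" using e0 by (simp add: power2_eq_square field_simps)
        then have "(1 + e) * real m \<le> (\<tau>+1)\<^sup>2/4 * real m" by (intro mult_right_mono) auto
        ultimately have "S m \<le> (\<tau>+1)\<^sup>2/4 * real m" by linarith
        then show "S m - S K0 \<le> (\<tau>+1)\<^sup>2/4 * real m" using S_nonneg[of K0] by simp
      qed (use tau in auto)
      also have "\<dots> \<le> \<tau>\<^sup>2 * real m * \<delta>\<^sup>2"
      proof -
        have "(2*\<tau>/(\<tau>-1)) * (\<delta>\<^sup>2 * real K0) \<le> (2*\<tau>/(\<tau>-1)) * (\<delta>\<^sup>2 * ((\<tau>-1)\<^sup>2 * real m / 4))"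
          using m4 tau by (intro mult_left_mono) auto
        also have "\<dots> = \<tau> * (\<tau>-1) / 2 * real m * \<delta>\<^sup>2" using tau by (simp add: power2_eq_square field_simps)
        finally have h1: "(2*\<tau>/(\<tau>-1)) * (\<delta>\<^sup>2 * real K0) \<le> \<tau> * (\<tau>-1) / 2 * real m * \<delta>\<^sup>2" .
        have h2: "(2*\<tau>/(\<tau>+1)) * \<delta>\<^sup>2 * ((\<tau>+1)\<^sup>2/4 * real m) = \<tau> * (\<tau>+1) / 2 * real m * \<delta>\<^sup>2"
          using tau by (simp add: power2_eq_square field_simps)
        have "(2*\<tau>/(\<tau>-1)) * (\<delta>\<^sup>2 * real K0) + (2*\<tau>/(\<tau>+1)) * \<delta>\<^sup>2 * ((\<tau>+1)\<^sup>2/4 * real m)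
           \<le> \<tau> * (\<tau>-1) / 2 * real m * \<delta>\<^sup>2 + \<tau> * (\<tau>+1) / 2 * real m * \<delta>\<^sup>2"
          using h1 h2 by linarith
        also have "\<dots> = \<tau>\<^sup>2 * real m * \<delta>\<^sup>2" by (simp add: field_simps power2_eq_square)
        finally show ?thesis .
      qed
      finally have "D m K0 \<le> (\<tau> * sqrt (real m) * \<delta>)\<^sup>2" by (simp add: power_mult_distrib)
      then have "sqrt (D m K0) \<le> sqrt ((\<tau> * sqrt (real m) * \<delta>)\<^sup>2)" by (rule real_sqrt_le_mono)
      then have "sqrt (D m K0) \<le> \<tau> * sqrt (real m) * \<delta>"
        using tau dpos by simp
      then show ?thesis unfolding Q_def using mK by simp
    qed
    then have "kdp_m \<tau> sv a \<delta> Z \<omega> m \<le> K0" by (rule kdpm_le)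
    moreover have "4 * real K0 / (\<tau>-1)\<^sup>2 \<ge> 0" by simp
    ultimately show ?thesis unfolding Bnd_def by linarith
  next
    case False
    have "kdp_m \<tau> sv a \<delta> Z \<omega> m \<le> m" using kdpm_Q[of m] unfolding Q_def by simp
    moreover have "real m \<le> Bnd"
    proof (cases "m \<ge> K0")
      case True
      then have "(\<tau>-1)\<^sup>2 * real m < 4 * real K0" using False by simp
      then have "real m \<le> 4 * real K0 / (\<tau>-1)\<^sup>2" using tau by (simp add: field_simps)
      then show ?thesis unfolding Bnd_def by simp
    next
      case False
      moreover have "4 * real K0 / (\<tau>-1)\<^sup>2 \<ge> 0" by simp
      ultimately show ?thesis unfolding Bnd_def by linarith
    qed
    ultimately show ?thesis by linarith
  qed
  define k0 where "k0 = kdp_m \<tau> sv a \<delta> Z \<omega> K0"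
  have Tk0: "T k0 \<le> (2*\<tau>\<^sup>2 + 11/3) * \<delta>\<^sup>2 * real K0"
  proof -
    have Qk0: "Q K0 k0" unfolding k0_def by (rule kdpm_Q)
    then have k0K: "k0 \<le> K0" unfolding Q_def by simp
    have "sqrt (D K0 k0) \<le> \<tau> * sqrt (real K0) * \<delta>" using Qk0 unfolding Q_def by simp
    moreover have "D K0 k0 \<ge> 0" unfolding D_def by (simp add: sum_nonneg)
    ultimately have "(sqrt (D K0 k0))\<^sup>2 \<le> (\<tau> * sqrt (real K0) * \<delta>)\<^sup>2"
      by (intro power_mono) auto
    then have "D K0 k0 \<le> (\<tau> * sqrt (real K0) * \<delta>)\<^sup>2" using \<open>D K0 k0 \<ge> 0\<close> by simp
    then have D1: "D K0 k0 \<le> \<tau>\<^sup>2 * real K0 * \<delta>\<^sup>2" by (simp add: power_mult_distrib)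
    have "(\<Sum>j\<in>{k0<..K0}. (ydag sv a j)\<^sup>2) \<le> (\<Sum>j\<in>{k0<..K0}. 2 * (ydelta sv a \<delta> Z \<omega> j)\<^sup>2 + 2 * (\<delta> * Z j \<omega>)\<^sup>2)"
    proof (intro sum_mono)
      fix j
      have "ydag sv a j = ydelta sv a \<delta> Z \<omega> j - \<delta> * Z j \<omega>" by (simp add: ydelta_def)
      then show "(ydag sv a j)\<^sup>2 \<le> 2 * (ydelta sv a \<delta> Z \<omega> j)\<^sup>2 + 2 * (\<delta> * Z j \<omega>)\<^sup>2"
        using sq_split2 by simp
    qed
    also have "\<dots> = 2 * D K0 k0 + 2 * \<delta>\<^sup>2 * (S K0 - S k0)"
      using S_split[OF k0K] by (simp add: D_def sum.distrib sum_distrib_left power_mult_distrib mult.assoc)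
    also have "\<dots> \<le> 2 * (\<tau>\<^sup>2 * real K0 * \<delta>\<^sup>2) + 2 * \<delta>\<^sup>2 * (4/3 * real K0)"
      using D1 Sall[of K0] S_nonneg[of k0] by (intro add_mono mult_left_mono) auto
    finally have "(\<Sum>j\<in>{k0<..K0}. (ydag sv a j)\<^sup>2) \<le> 2 * (\<tau>\<^sup>2 * real K0 * \<delta>\<^sup>2) + 2 * \<delta>\<^sup>2 * (4/3 * real K0)" .
    then show ?thesis using T_split[OF k0K] K0_P by (simp add: algebra_simps)
  qed
  define N where "N = nat \<lfloor>Bnd\<rfloor>"
  have leN: "kdp_m \<tau> sv a \<delta> Z \<omega> m \<le> N" for m
    using upper[of m] unfolding N_def by linarith
  have kdp_le: "kdp \<tau> sv a \<delta> Z \<omega> \<le> enat N"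
    unfolding kdp_def by (rule SUP_least) (simp add: leN)
  have kdp_ge: "enat k0 \<le> kdp \<tau> sv a \<delta> Z \<omega>"
    unfolding kdp_def k0_def using K0_ge3 by (intro SUP_upper2[of K0]) auto
  obtain K where K: "kdp \<tau> sv a \<delta> Z \<omega> = enat K"
    using kdp_le by (cases "kdp \<tau> sv a \<delta> Z \<omega>") auto
  have Kk0: "k0 \<le> K" using kdp_ge K by simp
  have KN: "K \<le> N" using kdp_le K by simp
  have Bnd0: "Bnd \<ge> 0" unfolding Bnd_def by simp
  have KB: "real K \<le> Bnd"
  proof -
    have "real K \<le> real (nat \<lfloor>Bnd\<rfloor>)" using KN unfolding N_def by simp
    also have "\<dots> = of_int \<lfloor>Bnd\<rfloor>" using Bnd0 by simp
    also have "\<dots> \<le> Bnd" by simp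
    finally show ?thesis .
  qed
  have A_eq: "A = 1 + 4 * \<tau> / (\<tau>-1)\<^sup>2"
  proof -
    have d: "(\<tau>-1)\<^sup>2 > 0" using tau by simp
    have e1: "(\<tau>+1)\<^sup>2 = (\<tau>-1)\<^sup>2 + 4 * \<tau>" by (simp add: power2_eq_square algebra_simps)
    have "A = (\<tau>+1)\<^sup>2 / (\<tau>-1)\<^sup>2" by (simp add: A_def A_tau_def power_divide)
    also have "\<dots> = 1 + 4 * \<tau> / (\<tau>-1)\<^sup>2" unfolding e1 using d by (simp add: add_divide_distrib)
    finally show ?thesis .
  qed
  have A1: "Bnd \<le> A * real K0"
  proof -
    have "4 / (\<tau>-1)\<^sup>2 \<le> 4 * \<tau> / (\<tau>-1)\<^sup>2" using tau by (simp add: divide_right_mono)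
    then have "real K0 * (4 / (\<tau>-1)\<^sup>2) \<le> real K0 * (4 * \<tau> / (\<tau>-1)\<^sup>2)" by (intro mult_left_mono) auto
    then show ?thesis unfolding Bnd_def A_eq by (simp add: algebra_simps)
  qed
  have A0: "A \<ge> 1" unfolding A_eq using tau by simp
  have SK: "S K \<le> 4/3 * A * real K0"
  proof (cases "K \<ge> n")
    case True
    then have "S K \<le> 4/3 * real K" by (rule Sup)
    also have "\<dots> \<le> 4/3 * (A * real K0)" using KB A1 by simp
    finally show ?thesis by simp
  next
    case False
    then have "S K \<le> 4/3 * real K0" using n_le K0k by (intro Sall) simp
    also have "\<dots> \<le> 4/3 * (A * real K0)" using A0 by (simp add: mult_le_cancel_right1)
    finally show ?thesis by simp
  qed
  have errK: "(err sv a \<delta> Z \<omega> K)\<^sup>2 \<le> (4/3 * A + 2*\<tau>\<^sup>2 + 11/3) * \<delta>\<^sup>2 * real K0"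
  proof -
    have "(err sv a \<delta> Z \<omega> K)\<^sup>2 = \<delta>\<^sup>2 * S K + T K"
      unfolding err_eq' using S_nonneg T_nonneg by simp
    also have "\<dots> \<le> \<delta>\<^sup>2 * (4/3 * A * real K0) + (2*\<tau>\<^sup>2 + 11/3) * \<delta>\<^sup>2 * real K0"
      using SK Tk0 T_mono[OF Kk0] by (intro add_mono mult_left_mono) auto
    finally show ?thesis by (simp add: algebra_simps)
  qed
  have CL: "err sv a \<delta> Z \<omega> K \<le> C_tau \<tau> * L"
  proof -
    have "C_tau \<tau> * L = sqrt ((6 * A + 6 + 4 * B_tau \<tau>) * \<delta>\<^sup>2 * real K0)"
      unfolding C_tau_def L_def A_def[symmetric] by (simp add: real_sqrt_mult[symmetric] algebra_simps)
    moreover have "(4/3 * A + 2*\<tau>\<^sup>2 + 11/3) \<le> 6 * A + 6 + 4 * B_tau \<tau>"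
    proof -
      have "4 * B_tau \<tau> = 9 * \<tau>\<^sup>2 + 6 * \<tau> + 1" unfolding B_tau_def by (simp add: power2_eq_square algebra_simps)
      moreover have "\<tau>\<^sup>2 \<ge> 0" by simp
      ultimately show ?thesis using A0 tau by linarith
    qed
    then have "(4/3 * A + 2*\<tau>\<^sup>2 + 11/3) * \<delta>\<^sup>2 * real K0 \<le> (6 * A + 6 + 4 * B_tau \<tau>) * \<delta>\<^sup>2 * real K0"
      by (intro mult_right_mono) auto
    ultimately have "(err sv a \<delta> Z \<omega> K)\<^sup>2 \<le> (6 * A + 6 + 4 * B_tau \<tau>) * \<delta>\<^sup>2 * real K0"
      using errK by linarith
    then have "err sv a \<delta> Z \<omega> K \<le> sqrt ((6 * A + 6 + 4 * B_tau \<tau>) * \<delta>\<^sup>2 * real K0)"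
      by (rule real_le_rsqrt)
    then show ?thesis using \<open>C_tau \<tau> * L = _\<close> by simp
  qed
  have LI: "L \<le> (INF k. err sv a \<delta> Z \<omega> k)" by (rule cINF_greatest) (auto intro: lower)
  have C0: "C_tau \<tau> \<ge> 0" unfolding C_tau_def A_tau_def B_tau_def
    by (intro mult_nonneg_nonneg real_sqrt_ge_zero add_nonneg_nonneg) auto
  have "err sv a \<delta> Z \<omega> K \<le> C_tau \<tau> * (INF k. err sv a \<delta> Z \<omega> k)"
    using CL mult_left_mono[OF LI C0] by linarith
  then show ?thesis using K by simp
qed



lemma kdp_enat_iff:
  "kdp \<tau> sv a \<delta> Z \<omega> = enat K \<longleftrightarrow>
    (\<forall>m. m \<ge> 1 \<longrightarrow> kdp_m \<tau> sv a \<delta> Z \<omega> m \<le> K) \<and> (\<exists>m. m \<ge> 1 \<and> kdp_m \<tau> sv a \<delta> Z \<omega> m = K)"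
  (is "?L \<longleftrightarrow> ?R")
proof
  let ?f = "kdp_m \<tau> sv a \<delta> Z \<omega>"
  assume L: ?L
  have le: "?f m \<le> K" if "m \<ge> 1" for m
  proof -
    have "enat (?f m) \<le> kdp \<tau> sv a \<delta> Z \<omega>" unfolding kdp_def using that by (intro SUP_upper) auto
    then show ?thesis using L by simp
  qed
  have ex: "\<exists>m. m \<ge> 1 \<and> ?f m = K"
  proof (rule ccontr)
    assume "\<not> ?thesis"
    then have lt: "?f m < K" if "m \<ge> 1" for m using le[OF that] that by force
    have K0: "K > 0" using lt[of 1] by simp
    have "kdp \<tau> sv a \<delta> Z \<omega> \<le> enat (K - 1)"
      unfolding kdp_def by (rule SUP_least) (use lt in force)
    then show False using L K0 by simp
  qed
  show ?R using le ex by blast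
next
  let ?f = "kdp_m \<tau> sv a \<delta> Z \<omega>"
  assume R: ?R
  then obtain m where m: "m \<ge> 1" "?f m = K" by blast
  have "kdp \<tau> sv a \<delta> Z \<omega> \<le> enat K"
    unfolding kdp_def by (rule SUP_least) (use R in force)
  moreover have "enat K \<le> kdp \<tau> sv a \<delta> Z \<omega>"
    unfolding kdp_def using m by (intro SUP_upper2[of m]) auto
  ultimately show ?L by simp
qed

lemma event_eq:
  "(kdp \<tau> sv a \<delta> Z \<omega> < \<infinity> \<and> P (the_enat (kdp \<tau> sv a \<delta> Z \<omega>))) \<longleftrightarrow>
   (\<exists>K. (\<forall>m. m \<ge> 1 \<longrightarrow> kdp_m \<tau> sv a \<delta> Z \<omega> m \<le> K) \<and> (\<exists>m. m \<ge> 1 \<and> kdp_m \<tau> sv a \<delta> Z \<omega> m = K) \<and> P K)"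
  by (metis enat_ord_simps(4) kdp_enat_iff not_enat_eq the_enat.simps)

lemma event_sets:
  fixes Z :: "nat \<Rightarrow> 'w \<Rightarrow> real"
  assumes sv_pos: "\<And>j. j \<ge> 1 \<Longrightarrow> sv j > 0"
    and s: "(\<lambda>j. (ydag sv a j)\<^sup>2) summable_on {1..}"
    and Zm: "\<And>j. j \<ge> 1 \<Longrightarrow> Z j \<in> borel_measurable M"
  shows "{\<omega> \<in> space M. kdp \<tau> sv a \<delta> Z \<omega> < \<infinity> \<and>
                  err sv a \<delta> Z \<omega> (the_enat (kdp \<tau> sv a \<delta> Z \<omega>))
                    \<le> C * (INF k. err sv a \<delta> Z \<omega> k)} \<in> sets M"
proof -
  have ydm: "(\<lambda>\<omega>. (ydelta sv a \<delta> Z \<omega> j)\<^sup>2) \<in> borel_measurable M" if "j \<ge> 1" for j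
    unfolding ydelta_def using Zm[OF that] by measurable
  have Dm[measurable]: "(\<lambda>\<omega>. (\<Sum>j\<in>{k<..m}. (ydelta sv a \<delta> Z \<omega> j)\<^sup>2)) \<in> borel_measurable M" for k m
    by (rule borel_measurable_sum) (use ydm in auto)
  have km[measurable]: "(\<lambda>\<omega>. kdp_m \<tau> sv a \<delta> Z \<omega> m) \<in> measurable M (count_space UNIV)" for m
    unfolding kdp_m_def
  proof (rule measurable_Least)
    fix k
    show "(\<lambda>\<omega>. k \<le> m \<and> sqrt (\<Sum>j\<in>{k<..m}. (ydelta sv a \<delta> Z \<omega> j)\<^sup>2) \<le> \<tau> * sqrt (real m) * \<delta>)
        \<in> measurable M (count_space UNIV)"
      by measurable
  qed
  have Sm[measurable]: "(\<lambda>\<omega>. (\<Sum>j=1..k. (Z j \<omega>)\<^sup>2)) \<in> borel_measurable M" for k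
    by (rule borel_measurable_sum) (use Zm in auto)
  have em[measurable]: "(\<lambda>\<omega>. err sv a \<delta> Z \<omega> k) \<in> borel_measurable M" for k
  proof -
    have eq: "(\<lambda>\<omega>. err sv a \<delta> Z \<omega> k) = (\<lambda>\<omega>. sqrt (\<delta>\<^sup>2 * (\<Sum>j=1..k. (Z j \<omega>)\<^sup>2) + infsum (\<lambda>j. (ydag sv a j)\<^sup>2) {k<..}))"
      by (simp add: err_eq[OF sv_pos s])
    show ?thesis unfolding eq by measurable
  qed
  have im[measurable]: "(\<lambda>\<omega>. INF k. err sv a \<delta> Z \<omega> k) \<in> borel_measurable M"
    by measurable
  have "{\<omega> \<in> space M. kdp \<tau> sv a \<delta> Z \<omega> < \<infinity> \<and>
                  err sv a \<delta> Z \<omega> (the_enat (kdp \<tau> sv a \<delta> Z \<omega>))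
                    \<le> C * (INF k. err sv a \<delta> Z \<omega> k)} =
        {\<omega> \<in> space M. \<exists>K. (\<forall>m. m \<ge> 1 \<longrightarrow> kdp_m \<tau> sv a \<delta> Z \<omega> m \<le> K) \<and> (\<exists>m. m \<ge> 1 \<and> kdp_m \<tau> sv a \<delta> Z \<omega> m = K) \<and>
            err sv a \<delta> Z \<omega> K \<le> C * (INF k. err sv a \<delta> Z \<omega> k)}"
    by (subst event_eq) simp
  also have "\<dots> \<in> sets M" by measurable
  finally show ?thesis .
qed



definition sw :: "nat \<Rightarrow> nat \<Rightarrow> nat \<Rightarrow> nat" where
  "sw i i' l = (if l = i then i' else if l = i' then i else l)"

lemma sw_in: "i \<in> I \<Longrightarrow> i' \<in> I \<Longrightarrow> l \<in> I \<Longrightarrow> sw i i' l \<in> I"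
  by (simp add: sw_def)

lemma sw_inj: "inj_on (sw i i') I"
  by (auto simp: inj_on_def sw_def split: if_splits)

lemma sw_bij: "i \<in> I \<Longrightarrow> i' \<in> I \<Longrightarrow> bij_betw (sw i i') I I"
proof -
  assume a: "i \<in> I" "i' \<in> I"
  have "sw i i' ` I = I"
  proof
    show "sw i i' ` I \<subseteq> I" using a sw_in by auto
    show "I \<subseteq> sw i i' ` I"
    proof
      fix l assume "l \<in> I"
      then have "sw i i' (sw i i' l) = l" "sw i i' l \<in> I" using a by (auto simp: sw_def)
      then show "l \<in> sw i i' ` I" by (metis image_eqI)
    qed
  qed
  then show ?thesis using sw_inj by (simp add: bij_betw_def)
qed

lemma sym_swap:
  fixes X :: "nat \<Rightarrow> 'a \<Rightarrow> real" and h :: "(nat \<Rightarrow> real) \<Rightarrow> real"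
  assumes M: "prob_space M"
    and Xm: "\<And>j. j \<ge> 1 \<Longrightarrow> X j \<in> borel_measurable M"
    and ind: "prob_space.indep_vars M (\<lambda>_. borel) X {1..}"
    and dis: "\<And>j. j \<ge> 1 \<Longrightarrow> distr M borel (X j) = distr M borel (X 1)"
    and i: "i \<in> {1..N}" and i': "i' \<in> {1..N}"
    and h: "h \<in> borel_measurable (PiM {1..N} (\<lambda>_. borel))"
  shows "(\<integral>\<omega>. h (\<lambda>l\<in>{1..N}. X l \<omega>) \<partial>M) = (\<integral>\<omega>. h (\<lambda>l\<in>{1..N}. X (sw i i' l) \<omega>) \<partial>M)"
proof -
  interpret prob_space M by (rule M)
  define I where "I = {1..N}"
  define D where "D = distr M borel (X 1)"
  define P where "P = PiM I (\<lambda>_. borel :: real measure)"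
  define V where "V \<omega> = (\<lambda>l\<in>I. X l \<omega>)" for \<omega>
  define t where "t x = (\<lambda>l\<in>I. x (sw i i' l))" for x :: "nat \<Rightarrow> real"
  have iI: "i \<in> I" "i' \<in> I" using i i' by (auto simp: I_def)
  have ne: "I \<noteq> {}" using iI by auto
  have indI: "indep_vars (\<lambda>_. borel) X I" by (rule indep_vars_subset[OF ind]) (auto simp: I_def)
  have rv: "random_variable borel (X l)" if "l \<in> I" for l using Xm that by (auto simp: I_def)
  have Vm: "V \<in> measurable M P" unfolding V_def P_def by (intro measurable_restrict rv)
  have dV: "distr M P V = PiM I (\<lambda>_. D)"
  proof -
    have "distr M P V = PiM I (\<lambda>l. distr M borel (X l))"
      using indep_vars_iff_distr_eq_PiM'[OF ne rv] indI unfolding P_def V_def by simp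
    also have "\<dots> = PiM I (\<lambda>_. D)" 
    proof (rule PiM_cong)
      fix l assume "l \<in> I" then show "distr M borel (X l) = D" unfolding D_def using dis[of l] by (simp add: I_def)
    qed simp
    finally show ?thesis .
  qed
  have setsD: "sets D = sets borel" unfolding D_def by simp
  have setsP: "sets (PiM I (\<lambda>_. D)) = sets P" unfolding P_def by (rule sets_PiM_cong) (auto simp: setsD)
  have hm: "h \<in> borel_measurable (PiM I (\<lambda>_. D))"
    using h unfolding I_def[symmetric] by (subst measurable_cong_sets[OF setsP refl]) (simp add: P_def)
  have tm: "t \<in> measurable (PiM I (\<lambda>_. D)) (PiM I (\<lambda>_. D))"
    unfolding t_def by (intro measurable_restrict measurable_component_singleton sw_in iI)
  have htm: "(\<lambda>x. h (t x)) \<in> borel_measurable (PiM I (\<lambda>_. D))"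
    using hm tm by measurable
  have htm': "(\<lambda>x. h (t x)) \<in> borel_measurable P"
    using htm by (subst measurable_cong_sets[OF setsP[symmetric] refl])
  have hP: "h \<in> borel_measurable P" using h unfolding P_def I_def .
  have probD: "prob_space D" unfolding D_def by (intro prob_space_distr rv) (use iI in \<open>auto simp: I_def\<close>)
  have reidx: "distr (PiM I (\<lambda>_. D)) (PiM I (\<lambda>_. D)) t = PiM I (\<lambda>_. D)"
    using distr_PiM_reindex[of I "\<lambda>_. D" "sw i i'" I] probD sw_inj sw_in[OF iI]
    unfolding t_def by auto
  have eqV: "(\<lambda>l\<in>I. X (sw i i' l) \<omega>) = t (V \<omega>)" for \<omega>
    unfolding t_def V_def using sw_in[OF iI] by (auto simp: fun_eq_iff)
  have "(\<integral>\<omega>. h (t (V \<omega>)) \<partial>M) = integral\<^sup>L (distr M P V) (\<lambda>x. h (t x))"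
    by (rule integral_distr[symmetric, OF Vm htm'])
  also have "\<dots> = integral\<^sup>L (PiM I (\<lambda>_. D)) (\<lambda>x. h (t x))" by (simp add: dV)
  also have "\<dots> = integral\<^sup>L (distr (PiM I (\<lambda>_. D)) (PiM I (\<lambda>_. D)) t) h"
    by (rule integral_distr[symmetric, OF tm hm])
  also have "\<dots> = integral\<^sup>L (distr M P V) h" by (simp add: reidx dV)
  also have "\<dots> = (\<integral>\<omega>. h (V \<omega>) \<partial>M)" by (rule integral_distr[OF Vm hP])
  finally show ?thesis unfolding I_def[symmetric] eqV V_def[symmetric] by simp
qed



definition wv :: "(real \<Rightarrow> real) \<Rightarrow> nat \<Rightarrow> (nat \<Rightarrow> real) \<Rightarrow> real" where
  "wv \<phi> m x = (\<Sum>l=1..m. \<phi> (x l)) / real m"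

lemma wv_restrict: "m \<le> N \<Longrightarrow> wv \<phi> m (\<lambda>l\<in>{1..N}. y l) = wv \<phi> m y"
  unfolding wv_def by (intro arg_cong[where f="\<lambda>s. s / real m"] sum.cong) auto

lemma wv_sw: "1 \<le> i \<Longrightarrow> i \<le> j \<Longrightarrow> wv \<phi> j (\<lambda>l. y (sw 1 i l)) = wv \<phi> j y"
  unfolding wv_def
  using sum.reindex_bij_betw[OF sw_bij[of 1 "{1..j}" i], of "\<lambda>l. \<phi> (y l)"] by simp

lemma comp_meas: "(\<lambda>x. x l) \<in> borel_measurable (PiM I (\<lambda>_. borel :: real measure))"
proof (cases "l \<in> I")
  case True then show ?thesis by (rule measurable_component_singleton)
next
  case False
  have "(\<lambda>x. x l) \<in> borel_measurable (PiM I (\<lambda>_. borel :: real measure)) \<longleftrightarrow>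
        (\<lambda>x. undefined :: real) \<in> borel_measurable (PiM I (\<lambda>_. borel :: real measure))"
    by (rule measurable_cong) (use False in \<open>auto simp: space_PiM\<close>)
  then show ?thesis by simp
qed

lemma wv_meas[measurable]:
  assumes [measurable]: "\<phi> \<in> borel_measurable borel"
  shows "wv \<phi> m \<in> borel_measurable (PiM I (\<lambda>_. borel :: real measure))"
proof -
  have [measurable]: "(\<lambda>x. x l) \<in> borel_measurable (PiM I (\<lambda>_. borel :: real measure))" for l
    by (rule comp_meas)
  show ?thesis unfolding wv_def by measurable
qed

lemma maxfin:
  fixes X :: "nat \<Rightarrow> 'a \<Rightarrow> real" and \<phi> :: "real \<Rightarrow> real"
  assumes M: "prob_space M"
    and Xm: "\<And>j. j \<ge> 1 \<Longrightarrow> X j \<in> borel_measurable M"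
    and ind: "prob_space.indep_vars M (\<lambda>_. borel) X {1..}"
    and dis: "\<And>j. j \<ge> 1 \<Longrightarrow> distr M borel (X j) = distr M borel (X 1)"
    and \<phi>m[measurable]: "\<phi> \<in> borel_measurable borel"
    and int\<phi>: "\<And>j. j \<ge> 1 \<Longrightarrow> integrable M (\<lambda>\<omega>. \<phi> (X j \<omega>))"
    and n: "1 \<le> n" "n \<le> N" and eps: "\<epsilon> > 0"
  shows "\<epsilon> * measure M {\<omega> \<in> space M. \<exists>m\<in>{n..N}. \<epsilon> \<le> \<bar>wv \<phi> m (\<lambda>l. X l \<omega>)\<bar>}
           \<le> (\<integral>\<omega>. \<bar>wv \<phi> n (\<lambda>l. X l \<omega>)\<bar> \<partial>M)"
proof -
  interpret prob_space M by (rule M)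
  define I where "I = {1..N}"
  define P where "P = PiM I (\<lambda>_. borel :: real measure)"
  define V where "V \<omega> = (\<lambda>l\<in>I. X l \<omega>)" for \<omega>
  define cnd where "cnd m x \<longleftrightarrow> \<epsilon> \<le> \<bar>wv \<phi> m x\<bar> \<and> (\<forall>j\<in>{m<..N}. \<bar>wv \<phi> j x\<bar> < \<epsilon>)" for m x
  define a where "a m x = (if cnd m x then 1 else 0::real)" for m x
  define g where "g m x = sgn (wv \<phi> m x) * a m x" for m x
  have rv: "random_variable borel (X l)" if "l \<in> I" for l using Xm that by (auto simp: I_def)
  have Vm[measurable]: "V \<in> measurable M P" unfolding V_def P_def by (intro measurable_restrict rv)
  have wvm[measurable]: "wv \<phi> m \<in> borel_measurable P" for m unfolding P_def by (rule wv_meas[OF \<phi>m])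
  have cm[measurable]: "Measurable.pred P (cnd m)" for m
    unfolding cnd_def by measurable
  have am[measurable]: "a m \<in> borel_measurable P" for m unfolding a_def by measurable
  have gm[measurable]: "g m \<in> borel_measurable P" for m unfolding g_def by measurable
  have a01: "a m x = 0 \<or> a m x = 1" for m x unfolding a_def by simp
  have g1: "\<bar>g m x\<bar> \<le> 1" for m x unfolding g_def a_def by (auto simp: sgn_if)
  have wvV: "wv \<phi> m (V \<omega>) = wv \<phi> m (\<lambda>l. X l \<omega>)" if "m \<le> N" for m \<omega>
    using wv_restrict[OF that] unfolding V_def I_def by simp
  have int_phig: "integrable M (\<lambda>\<omega>. \<phi> (X i \<omega>) * g m (V \<omega>))" if "i \<ge> 1" for i m
  proof (rule Bochner_Integration.integrable_bound[OF int\<phi>[OF that]])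
    show "(\<lambda>\<omega>. \<phi> (X i \<omega>) * g m (V \<omega>)) \<in> borel_measurable M"
      using Xm[OF that] by measurable
    show "AE x in M. norm (\<phi> (X i x) * g m (V x)) \<le> norm (\<phi> (X i x))"
      using g1 by (auto simp: abs_mult intro!: mult_left_le)
  qed
  have int_wv: "integrable M (\<lambda>\<omega>. wv \<phi> m (V \<omega>))" if "m \<le> N" for m
  proof -
    have "integrable M (\<lambda>\<omega>. (\<Sum>l=1..m. \<phi> (X l \<omega>)) / real m)"
      by (intro integrable_divide_zero integrable_sum) (use int\<phi> in auto)
    moreover have "(\<lambda>\<omega>. wv \<phi> m (V \<omega>)) = (\<lambda>\<omega>. wv \<phi> m (\<lambda>l. X l \<omega>))" using wvV[OF that] by simp
    ultimately show ?thesis by (simp add: wv_def)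
  qed
  have bnd_int: "integrable M (\<lambda>\<omega>. f \<omega> * b \<omega>)"
    if "integrable M f" "f \<in> borel_measurable M" "b \<in> borel_measurable M" "\<And>\<omega>. \<bar>b \<omega>\<bar> \<le> 1" for f b :: "'a \<Rightarrow> real"
  proof (rule Bochner_Integration.integrable_bound[OF that(1)])
    show "(\<lambda>\<omega>. f \<omega> * b \<omega>) \<in> borel_measurable M" using that(2,3) by measurable
    show "AE x in M. norm (f x * b x) \<le> norm (f x)"
      using that(4) by (auto simp: abs_mult intro!: mult_left_le)
  qed
  have symm: "(\<integral>\<omega>. \<phi> (X i \<omega>) * g m (V \<omega>) \<partial>M) = (\<integral>\<omega>. \<phi> (X 1 \<omega>) * g m (V \<omega>) \<partial>M)"
    if im: "1 \<le> i" "i \<le> m" "m \<le> N" for i m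
  proof -
    define h where "h x = \<phi> (x i) * g m x" for x :: "nat \<Rightarrow> real"
    have [measurable]: "(\<lambda>x. x i) \<in> borel_measurable (PiM {1..N} (\<lambda>_. borel :: real measure))"
      by (rule comp_meas)
    have gm': "g m \<in> borel_measurable (PiM {1..N} (\<lambda>_. borel :: real measure))"
      using gm[of m] unfolding P_def I_def .
    have hm: "h \<in> borel_measurable (PiM {1..N} (\<lambda>_. borel))"
      unfolding h_def using gm' by measurable
    have iI: "i \<in> {1..N}" "1 \<in> {1..N}" using im by auto
    have eq: "(\<integral>\<omega>. h (\<lambda>l\<in>{1..N}. X l \<omega>) \<partial>M) = (\<integral>\<omega>. h (\<lambda>l\<in>{1..N}. X (sw 1 i l) \<omega>) \<partial>M)"
      by (rule sym_swap[OF M Xm ind dis iI(2) iI(1) hm])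
    have lhs: "h (\<lambda>l\<in>{1..N}. X l \<omega>) = \<phi> (X i \<omega>) * g m (V \<omega>)" for \<omega>
      unfolding h_def V_def I_def using iI by simp
    have gsw: "g m (\<lambda>l\<in>{1..N}. X (sw 1 i l) \<omega>) = g m (V \<omega>)" for \<omega>
    proof -
      have ej: "wv \<phi> j (\<lambda>l\<in>{1..N}. X (sw 1 i l) \<omega>) = wv \<phi> j (V \<omega>)" if "m \<le> j" "j \<le> N" for j
      proof -
        have "wv \<phi> j (\<lambda>l\<in>{1..N}. X (sw 1 i l) \<omega>) = wv \<phi> j (\<lambda>l. X (sw 1 i l) \<omega>)"
          by (rule wv_restrict) fact
        also have "\<dots> = wv \<phi> j (\<lambda>l. X l \<omega>)" using wv_sw[of i j \<phi> "\<lambda>l. X l \<omega>"] im that by simp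
        also have "\<dots> = wv \<phi> j (V \<omega>)" using wvV that by simp
        finally show ?thesis .
      qed
      have e1: "wv \<phi> m (\<lambda>l\<in>{1..N}. X (sw 1 i l) \<omega>) = wv \<phi> m (V \<omega>)" using ej im by simp
      have e2: "(\<forall>j\<in>{m<..N}. \<bar>wv \<phi> j (\<lambda>l\<in>{1..N}. X (sw 1 i l) \<omega>)\<bar> < \<epsilon>) \<longleftrightarrow>
                (\<forall>j\<in>{m<..N}. \<bar>wv \<phi> j (V \<omega>)\<bar> < \<epsilon>)"
        using ej by auto
      show ?thesis unfolding g_def a_def cnd_def e1 e2 ..
    qed
    have rhs: "h (\<lambda>l\<in>{1..N}. X (sw 1 i l) \<omega>) = \<phi> (X 1 \<omega>) * g m (V \<omega>)" for \<omega>
      unfolding h_def gsw using iI by (simp add: sw_def)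
    show ?thesis using eq unfolding lhs rhs .
  qed
  have key: "(\<integral>\<omega>. wv \<phi> m (V \<omega>) * g m (V \<omega>) \<partial>M) = (\<integral>\<omega>. wv \<phi> n (V \<omega>) * g m (V \<omega>) \<partial>M)"
    if nm: "n \<le> m" "m \<le> N" for m
  proof -
    have avg: "(\<integral>\<omega>. wv \<phi> k (V \<omega>) * g m (V \<omega>) \<partial>M) = (\<integral>\<omega>. \<phi> (X 1 \<omega>) * g m (V \<omega>) \<partial>M)"
      if k: "1 \<le> k" "k \<le> m" for k
    proof -
      have fe: "(\<lambda>\<omega>. wv \<phi> k (V \<omega>) * g m (V \<omega>)) = (\<lambda>\<omega>. (\<Sum>i=1..k. \<phi> (X i \<omega>) * g m (V \<omega>)) / real k)"
        using wvV[of k] k nm by (auto simp: wv_def sum_distrib_right)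
      have "(\<integral>\<omega>. (\<Sum>i=1..k. \<phi> (X i \<omega>) * g m (V \<omega>)) / real k \<partial>M)
          = (\<Sum>i=1..k. (\<integral>\<omega>. \<phi> (X i \<omega>) * g m (V \<omega>) \<partial>M)) / real k"
      proof -
        have "(\<integral>\<omega>. (\<Sum>i=1..k. \<phi> (X i \<omega>) * g m (V \<omega>)) \<partial>M) = (\<Sum>i=1..k. (\<integral>\<omega>. \<phi> (X i \<omega>) * g m (V \<omega>) \<partial>M))"
          by (rule Bochner_Integration.integral_sum) (auto intro: int_phig)
        then show ?thesis by simp
      qed
      also have "\<dots> = (\<Sum>i=1..k. (\<integral>\<omega>. \<phi> (X 1 \<omega>) * g m (V \<omega>) \<partial>M)) / real k"
      proof (intro arg_cong[where f="\<lambda>s. s / real k"] sum.cong refl)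
        fix i assume "i \<in> {1..k}"
        then show "(\<integral>\<omega>. \<phi> (X i \<omega>) * g m (V \<omega>) \<partial>M) = (\<integral>\<omega>. \<phi> (X 1 \<omega>) * g m (V \<omega>) \<partial>M)"
          by (intro symm) (use k nm in auto)
      qed
      also have "\<dots> = (\<integral>\<omega>. \<phi> (X 1 \<omega>) * g m (V \<omega>) \<partial>M)" using k by simp
      finally show ?thesis unfolding fe .
    qed
    show ?thesis using avg[of m] avg[of n] nm n by simp
  qed
  have ind_sum: "(if \<exists>m\<in>{n..N}. \<epsilon> \<le> \<bar>wv \<phi> m x\<bar> then 1 else 0) = (\<Sum>m=n..N. a m x)" for x
  proof (cases "\<exists>m\<in>{n..N}. \<epsilon> \<le> \<bar>wv \<phi> m x\<bar>")
    case True
    define F where "F = {m\<in>{n..N}. \<epsilon> \<le> \<bar>wv \<phi> m x\<bar>}"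
    define m0 where "m0 = Max F"
    have fF: "finite F" and neF: "F \<noteq> {}" using True by (auto simp: F_def)
    have m0F: "m0 \<in> F" unfolding m0_def using fF neF by (rule Max_in)
    have m0max: "j \<le> m0" if "j \<in> F" for j unfolding m0_def using fF that by (rule Max_ge)
    have "a m x = (if m = m0 then 1 else 0)" if "m \<in> {n..N}" for m
    proof (cases "m = m0")
      case True
      have "cnd m x"
        unfolding cnd_def
      proof
        show "\<epsilon> \<le> \<bar>wv \<phi> m x\<bar>" using m0F True by (simp add: F_def)
        show "\<forall>j\<in>{m<..N}. \<bar>wv \<phi> j x\<bar> < \<epsilon>"
        proof
          fix j assume j: "j \<in> {m<..N}"
          show "\<bar>wv \<phi> j x\<bar> < \<epsilon>"
          proof (rule ccontr)
            assume "\<not> ?thesis"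
            then have "j \<in> F" using j that by (auto simp: F_def)
            then show False using m0max[of j] j True by simp
          qed
        qed
      qed
      then show ?thesis using True by (simp add: a_def)
    next
      case False
      have "\<not> cnd m x"
      proof
        assume c: "cnd m x"
        then have "m \<in> F" using that by (simp add: cnd_def F_def)
        then have "m < m0" using m0max[of m] False by simp
        moreover have "m0 \<le> N" using m0F by (simp add: F_def)
        ultimately have "\<bar>wv \<phi> m0 x\<bar> < \<epsilon>" using c by (simp add: cnd_def)
        then show False using m0F by (simp add: F_def)
      qed
      then show ?thesis using False by (simp add: a_def)
    qed
    then have "(\<Sum>m=n..N. a m x) = (\<Sum>m=n..N. if m = m0 then 1 else 0)" by (intro sum.cong) auto
    also have "\<dots> = 1" using m0F by (simp add: F_def)
    finally show ?thesis using True by simp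
  next
    case False
    then have "a m x = 0" if "m \<in> {n..N}" for m using that by (auto simp: a_def cnd_def)
    then show ?thesis using False by simp
  qed
  define S where "S = {\<omega> \<in> space M. \<exists>m\<in>{n..N}. \<epsilon> \<le> \<bar>wv \<phi> m (\<lambda>l. X l \<omega>)\<bar>}"
  have int_a: "integrable M (\<lambda>\<omega>. a m (V \<omega>))" for m
  proof (rule Bochner_Integration.integrable_bound[of M "\<lambda>_. 1::real"])
    show "(\<lambda>\<omega>. a m (V \<omega>)) \<in> borel_measurable M" by measurable
    have "\<bar>a m x\<bar> \<le> 1" for x using a01[of m x] by auto
    then show "AE x in M. norm (a m (V x)) \<le> norm (1::real)" by simp
  qed simp
  have int_wg: "integrable M (\<lambda>\<omega>. wv \<phi> k (V \<omega>) * g m (V \<omega>))" if "k \<le> N" for k m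
    by (rule bnd_int[OF int_wv[OF that]]) (auto intro: g1)
  have int_wa: "integrable M (\<lambda>\<omega>. \<bar>wv \<phi> n (V \<omega>)\<bar> * a m (V \<omega>))" for m
  proof (rule bnd_int)
    show "integrable M (\<lambda>\<omega>. \<bar>wv \<phi> n (V \<omega>)\<bar>)" using int_wv[OF n(2)] by simp
    show "\<bar>a m (V \<omega>)\<bar> \<le> 1" for \<omega> using a01[of m "V \<omega>"] by auto
  qed (measurable, measurable)
  have "S \<inter> space M = S" by (auto simp: S_def)
  then have "measure M S = (\<integral>\<omega>. indicator S \<omega> \<partial>M)" by simp
  also have "\<dots> = (\<integral>\<omega>. (\<Sum>m=n..N. a m (V \<omega>)) \<partial>M)"
  proof (rule Bochner_Integration.integral_cong[OF refl])
    fix \<omega> assume \<omega>: "\<omega> \<in> space M"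
    have "(\<exists>m\<in>{n..N}. \<epsilon> \<le> \<bar>wv \<phi> m (\<lambda>l. X l \<omega>)\<bar>) \<longleftrightarrow> (\<exists>m\<in>{n..N}. \<epsilon> \<le> \<bar>wv \<phi> m (V \<omega>)\<bar>)"
      using wvV by auto
    then show "indicator S \<omega> = (\<Sum>m=n..N. a m (V \<omega>))"
      using ind_sum[of "V \<omega>"] \<omega> unfolding S_def indicator_def by (auto split: if_splits)
  qed
  also have "\<dots> = (\<Sum>m=n..N. (\<integral>\<omega>. a m (V \<omega>) \<partial>M))"
    by (rule Bochner_Integration.integral_sum) (rule int_a)
  finally have mS: "\<epsilon> * measure M S = (\<Sum>m=n..N. (\<integral>\<omega>. \<epsilon> * a m (V \<omega>) \<partial>M))"
    by (simp add: sum_distrib_left)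
  also have "\<dots> \<le> (\<Sum>m=n..N. (\<integral>\<omega>. wv \<phi> m (V \<omega>) * g m (V \<omega>) \<partial>M))"
  proof (rule sum_mono, rule integral_mono)
    fix m assume "m \<in> {n..N}"
    then show "integrable M (\<lambda>\<omega>. wv \<phi> m (V \<omega>) * g m (V \<omega>))" by (intro int_wg) auto
    show "integrable M (\<lambda>\<omega>. \<epsilon> * a m (V \<omega>))" using int_a by simp
    fix \<omega>
    show "\<epsilon> * a m (V \<omega>) \<le> wv \<phi> m (V \<omega>) * g m (V \<omega>)"
      unfolding g_def a_def cnd_def by (auto simp: sgn_if)
  qed
  also have "\<dots> = (\<Sum>m=n..N. (\<integral>\<omega>. wv \<phi> n (V \<omega>) * g m (V \<omega>) \<partial>M))"
    by (intro sum.cong refl key) auto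
  also have "\<dots> \<le> (\<Sum>m=n..N. (\<integral>\<omega>. \<bar>wv \<phi> n (V \<omega>)\<bar> * a m (V \<omega>) \<partial>M))"
  proof (rule sum_mono, rule integral_mono)
    fix m assume "m \<in> {n..N}"
    show "integrable M (\<lambda>\<omega>. wv \<phi> n (V \<omega>) * g m (V \<omega>))" using n by (intro int_wg) auto
    show "integrable M (\<lambda>\<omega>. \<bar>wv \<phi> n (V \<omega>)\<bar> * a m (V \<omega>))" by (rule int_wa)
    fix \<omega>
    show "wv \<phi> n (V \<omega>) * g m (V \<omega>) \<le> \<bar>wv \<phi> n (V \<omega>)\<bar> * a m (V \<omega>)"
      unfolding g_def a_def by (auto simp: sgn_if)
  qed
  also have "\<dots> = (\<integral>\<omega>. \<bar>wv \<phi> n (V \<omega>)\<bar> * (\<Sum>m=n..N. a m (V \<omega>)) \<partial>M)"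
    unfolding sum_distrib_left by (rule Bochner_Integration.integral_sum[symmetric]) (rule int_wa)
  also have "\<dots> \<le> (\<integral>\<omega>. \<bar>wv \<phi> n (V \<omega>)\<bar> \<partial>M)"
  proof (rule integral_mono')
    show "integrable M (\<lambda>\<omega>. \<bar>wv \<phi> n (V \<omega>)\<bar>)" using int_wv[OF n(2)] by simp
    fix \<omega>
    have "(\<Sum>m=n..N. a m (V \<omega>)) \<le> 1" using ind_sum[of "V \<omega>", symmetric] by simp
    then show "\<bar>wv \<phi> n (V \<omega>)\<bar> * (\<Sum>m=n..N. a m (V \<omega>)) \<le> \<bar>wv \<phi> n (V \<omega>)\<bar>"
      by (simp add: mult_left_le)
  qed simp
  also have "\<dots> = (\<integral>\<omega>. \<bar>wv \<phi> n (\<lambda>l. X l \<omega>)\<bar> \<partial>M)" using wvV[OF n(2)] by simp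
  finally show ?thesis unfolding S_def .
qed



lemma wvX_meas:
  fixes X :: "nat \<Rightarrow> 'a \<Rightarrow> real"
  assumes Xm: "\<And>j. j \<ge> 1 \<Longrightarrow> X j \<in> borel_measurable M" and [measurable]: "\<phi> \<in> borel_measurable borel"
  shows "(\<lambda>\<omega>. wv \<phi> m (\<lambda>l. X l \<omega>)) \<in> borel_measurable M"
proof -
  have "(\<lambda>\<omega>. \<Sum>l=1..m. \<phi> (X l \<omega>)) \<in> borel_measurable M"
  proof (rule borel_measurable_sum)
    fix l assume "l \<in> {1..m}"
    then have [measurable]: "X l \<in> borel_measurable M" using Xm by simp
    show "(\<lambda>\<omega>. \<phi> (X l \<omega>)) \<in> borel_measurable M" by measurable
  qed
  then show ?thesis unfolding wv_def by measurable
qed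

lemma maxinf:
  fixes X :: "nat \<Rightarrow> 'a \<Rightarrow> real" and \<phi> :: "real \<Rightarrow> real"
  assumes M: "prob_space M"
    and Xm: "\<And>j. j \<ge> 1 \<Longrightarrow> X j \<in> borel_measurable M"
    and ind: "prob_space.indep_vars M (\<lambda>_. borel) X {1..}"
    and dis: "\<And>j. j \<ge> 1 \<Longrightarrow> distr M borel (X j) = distr M borel (X 1)"
    and \<phi>m[measurable]: "\<phi> \<in> borel_measurable borel"
    and int\<phi>: "\<And>j. j \<ge> 1 \<Longrightarrow> integrable M (\<lambda>\<omega>. \<phi> (X j \<omega>))"
    and n: "1 \<le> n" and eps: "\<epsilon> > 0"
  shows "\<epsilon> * measure M {\<omega> \<in> space M. \<exists>m\<ge>n. \<epsilon> < \<bar>wv \<phi> m (\<lambda>l. X l \<omega>)\<bar>}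
           \<le> (\<integral>\<omega>. \<bar>wv \<phi> n (\<lambda>l. X l \<omega>)\<bar> \<partial>M)"
proof -
  interpret prob_space M by (rule M)
  have [measurable]: "(\<lambda>\<omega>. wv \<phi> m (\<lambda>l. X l \<omega>)) \<in> borel_measurable M" for m
    by (rule wvX_meas[OF Xm \<phi>m])
  define A where "A N = {\<omega> \<in> space M. \<exists>m\<in>{n..N}. \<epsilon> \<le> \<bar>wv \<phi> m (\<lambda>l. X l \<omega>)\<bar>}" for N
  define B where "B = {\<omega> \<in> space M. \<exists>m\<ge>n. \<epsilon> < \<bar>wv \<phi> m (\<lambda>l. X l \<omega>)\<bar>}"
  define E where "E = (\<integral>\<omega>. \<bar>wv \<phi> n (\<lambda>l. X l \<omega>)\<bar> \<partial>M)"
  have E0: "E \<ge> 0" unfolding E_def by simp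
  have As: "A N \<in> sets M" for N
  proof -
    have "Measurable.pred M (\<lambda>\<omega>. \<exists>m\<in>{n..N}. \<epsilon> \<le> \<bar>wv \<phi> m (\<lambda>l. X l \<omega>)\<bar>)"
      by (rule pred_intros_finite) auto
    then show ?thesis unfolding A_def by measurable
  qed
  have inc: "incseq A" unfolding incseq_def A_def by auto
  have bnd: "measure M (A N) \<le> E / \<epsilon>" for N
  proof (cases "n \<le> N")
    case True
    from maxfin[OF M Xm ind dis \<phi>m int\<phi> n True eps] show ?thesis
      unfolding A_def E_def using eps by (simp add: field_simps)
  next
    case False
    then have "A N = {}" unfolding A_def by auto
    then show ?thesis using E0 eps by simp
  qed
  have lim: "(\<lambda>N. measure M (A N)) \<longlonglongrightarrow> measure M (\<Union>N. A N)"
    by (rule finite_Lim_measure_incseq) (use As inc in auto)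
  have "measure M (\<Union>N. A N) \<le> E / \<epsilon>"
    by (rule LIMSEQ_le_const2[OF lim]) (use bnd in auto)
  moreover have "measure M B \<le> measure M (\<Union>N. A N)"
  proof (rule finite_measure_mono)
    show "B \<subseteq> (\<Union>N. A N)" unfolding A_def B_def by force
    show "(\<Union>N. A N) \<in> sets M" using As by auto
  qed
  ultimately have "measure M B \<le> E / \<epsilon>" by linarith
  then show ?thesis using eps unfolding B_def E_def by (simp add: field_simps)
qed



lemma same_distr_integral:
  fixes X :: "nat \<Rightarrow> 'a \<Rightarrow> real" and f :: "real \<Rightarrow> real"
  assumes Xj: "X j \<in> borel_measurable M" and X1: "X 1 \<in> borel_measurable M"
    and dis: "distr M borel (X j) = distr M borel (X 1)" and f: "f \<in> borel_measurable borel"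
  shows "(\<integral>\<omega>. f (X j \<omega>) \<partial>M) = (\<integral>\<omega>. f (X 1 \<omega>) \<partial>M)"
  using integral_distr[OF Xj f] integral_distr[OF X1 f] dis by simp

lemma abs_integral_le:
  fixes f :: "'a \<Rightarrow> real"
  assumes "integrable M f"
  shows "\<bar>integral\<^sup>L M f\<bar> \<le> (\<integral>x. \<bar>f x\<bar> \<partial>M)"
proof -
  have "integral\<^sup>L M f \<le> (\<integral>x. \<bar>f x\<bar> \<partial>M)" using assms by (intro integral_mono) auto
  moreover have "- integral\<^sup>L M f \<le> (\<integral>x. \<bar>f x\<bar> \<partial>M)"
  proof -
    have "(\<integral>x. - f x \<partial>M) \<le> (\<integral>x. \<bar>f x\<bar> \<partial>M)" using assms by (intro integral_mono) auto
    then show ?thesis by simp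
  qed
  ultimately show ?thesis by linarith
qed

lemma abs_le_sq: "\<bar>x::real\<bar> \<le> (x\<^sup>2 + a\<^sup>2) / (2 * a)" if "a > 0"
proof -
  have "0 \<le> (\<bar>x\<bar> - a)\<^sup>2" by simp
  then have "2 * a * \<bar>x\<bar> \<le> x\<^sup>2 + a\<^sup>2" by (simp add: power2_eq_square algebra_simps)
  then show ?thesis using that by (simp add: field_simps)
qed

lemma wlln_bound:
  fixes X :: "nat \<Rightarrow> 'a \<Rightarrow> real" and \<phi> :: "real \<Rightarrow> real"
  assumes M: "prob_space M"
    and Xm: "\<And>j. j \<ge> 1 \<Longrightarrow> X j \<in> borel_measurable M"
    and ind: "prob_space.indep_vars M (\<lambda>_. borel) X {1..}"
    and dis: "\<And>j. j \<ge> 1 \<Longrightarrow> distr M borel (X j) = distr M borel (X 1)"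
    and \<phi>m[measurable]: "\<phi> \<in> borel_measurable borel"
    and int\<phi>: "\<And>j. j \<ge> 1 \<Longrightarrow> integrable M (\<lambda>\<omega>. \<phi> (X j \<omega>))"
    and mean: "\<And>j. j \<ge> 1 \<Longrightarrow> (\<integral>\<omega>. \<phi> (X j \<omega>) \<partial>M) = 0"
    and c: "c \<ge> 0" and eta: "\<eta> > 0" and n: "n \<ge> 1"
  shows "(\<integral>\<omega>. \<bar>wv \<phi> n (\<lambda>l. X l \<omega>)\<bar> \<partial>M) \<le>
      2 * c\<^sup>2 / (real n * \<eta>) + \<eta> / 2 + 2 * (\<integral>\<omega>. \<bar>if \<bar>\<phi> (X 1 \<omega>)\<bar> \<le> c then 0 else \<phi> (X 1 \<omega>)\<bar> \<partial>M)"
proof -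
  interpret prob_space M by (rule M)
  define u where "u y = (if \<bar>y\<bar> \<le> c then y else 0)" for y :: real
  define r where "r y = (if \<bar>y\<bar> \<le> c then 0 else y)" for y :: real
  define t where "t = (\<integral>\<omega>. \<bar>r (\<phi> (X 1 \<omega>))\<bar> \<partial>M)"
  define \<mu> where "\<mu> = (\<integral>\<omega>. u (\<phi> (X 1 \<omega>)) \<partial>M)"
  define U where "U j \<omega> = u (\<phi> (X j \<omega>)) - \<mu>" for j \<omega>
  have Xm'[measurable]: "X j \<in> borel_measurable M" if "j \<ge> 1" for j using Xm that by simp
  have X1[measurable]: "X 1 \<in> borel_measurable M" using Xm by simp
  have um[measurable]: "u \<in> borel_measurable borel" unfolding u_def by measurable
  have rm[measurable]: "r \<in> borel_measurable borel" unfolding r_def by measurable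
  have ur: "y = u y + r y" for y unfolding u_def r_def by simp
  have ub: "\<bar>u y\<bar> \<le> c" for y unfolding u_def using c by auto
  have ub2: "\<bar>u y\<bar> \<le> \<bar>y\<bar>" for y unfolding u_def by auto
  have rb: "\<bar>r y\<bar> \<le> \<bar>y\<bar>" for y unfolding r_def by auto
  have int_u: "integrable M (\<lambda>\<omega>. u (\<phi> (X j \<omega>)))" if "j \<ge> 1" for j
  proof (rule Bochner_Integration.integrable_bound[OF int\<phi>[OF that]])
    show "(\<lambda>\<omega>. u (\<phi> (X j \<omega>))) \<in> borel_measurable M" using that by measurable
  qed (use ub2 in auto)
  have int_r: "integrable M (\<lambda>\<omega>. r (\<phi> (X j \<omega>)))" if "j \<ge> 1" for j
  proof (rule Bochner_Integration.integrable_bound[OF int\<phi>[OF that]])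
    show "(\<lambda>\<omega>. r (\<phi> (X j \<omega>))) \<in> borel_measurable M" using that by measurable
  qed (use rb in auto)
  have Et: "(\<integral>\<omega>. \<bar>r (\<phi> (X j \<omega>))\<bar> \<partial>M) = t" if "j \<ge> 1" for j
    unfolding t_def by (rule same_distr_integral[OF Xm'[OF that] X1 dis[OF that]]) measurable
  have Eu: "(\<integral>\<omega>. u (\<phi> (X j \<omega>)) \<partial>M) = \<mu>" if "j \<ge> 1" for j
    unfolding \<mu>_def by (rule same_distr_integral[OF Xm'[OF that] X1 dis[OF that]]) measurable
  have \<mu>t: "\<bar>\<mu>\<bar> \<le> t"
  proof -
    have "0 = (\<integral>\<omega>. u (\<phi> (X 1 \<omega>)) + r (\<phi> (X 1 \<omega>)) \<partial>M)" using mean[of 1] ur by simp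
    also have "\<dots> = \<mu> + (\<integral>\<omega>. r (\<phi> (X 1 \<omega>)) \<partial>M)" unfolding \<mu>_def using int_u int_r by simp
    finally have "\<mu> = - (\<integral>\<omega>. r (\<phi> (X 1 \<omega>)) \<partial>M)" by simp
    then show ?thesis unfolding t_def using abs_integral_le[OF int_r[of 1]] by simp
  qed
  have \<mu>c: "\<bar>\<mu>\<bar> \<le> c"
  proof -
    have "\<bar>\<mu>\<bar> \<le> (\<integral>\<omega>. \<bar>u (\<phi> (X 1 \<omega>))\<bar> \<partial>M)" unfolding \<mu>_def by (rule abs_integral_le[OF int_u]) simp
    also have "\<dots> \<le> (\<integral>\<omega>. c \<partial>M)" using int_u[of 1] ub by (intro integral_mono) auto
    finally show ?thesis by (simp add: prob_space)
  qed
  have Ub: "\<bar>U j \<omega>\<bar> \<le> 2 * c" for j \<omega> unfolding U_def using ub[of "\<phi> (X j \<omega>)"] \<mu>c by linarith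
  have Um[measurable]: "U j \<in> borel_measurable M" if "j \<ge> 1" for j unfolding U_def using that by measurable
  have int_U: "integrable M (U j)" if "j \<ge> 1" for j unfolding U_def using int_u[OF that] by simp
  have EU: "(\<integral>\<omega>. U j \<omega> \<partial>M) = 0" if "j \<ge> 1" for j unfolding U_def using int_u[OF that] Eu[OF that] by (simp add: prob_space)
  have int_UU: "integrable M (\<lambda>\<omega>. U i \<omega> * U k \<omega>)" if "i \<ge> 1" "k \<ge> 1" for i k
  proof (rule Bochner_Integration.integrable_bound[of M "\<lambda>_. 4 * c\<^sup>2"])
    show "(\<lambda>\<omega>. U i \<omega> * U k \<omega>) \<in> borel_measurable M" using that by measurable
    have "\<bar>U i x * U k x\<bar> \<le> 2 * c * (2 * c)" for x
      unfolding abs_mult by (rule mult_mono) (use Ub c in auto)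
    then show "AE x in M. norm (U i x * U k x) \<le> norm (4 * c\<^sup>2)" by (simp add: power2_eq_square)
  qed simp
  have indU: "indep_vars (\<lambda>_. borel) U {1..}"
  proof -
    have "indep_vars (\<lambda>_. borel) (\<lambda>j \<omega>. (\<lambda>x. u (\<phi> x) - \<mu>) (X j \<omega>)) {1..}"
      by (rule indep_vars_compose2[OF ind]) measurable
    then show ?thesis unfolding U_def by simp
  qed
  have cross: "(\<integral>\<omega>. U i \<omega> * U k \<omega> \<partial>M) = 0" if "i \<ge> 1" "k \<ge> 1" "i \<noteq> k" for i k
  proof -
    have ik: "indep_vars (\<lambda>_. borel) U {i, k}" by (rule indep_vars_subset[OF indU]) (use that in auto)
    have "(\<integral>\<omega>. (\<Prod>j\<in>{i,k}. U j \<omega>) \<partial>M) = (\<Prod>j\<in>{i,k}. (\<integral>\<omega>. U j \<omega> \<partial>M))"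
      by (rule indep_vars_lebesgue_integral[OF _ ik]) (use that int_U in auto)
    then show ?thesis using that EU by simp
  qed
  have sq: "(\<integral>\<omega>. (\<Sum>l=1..n. U l \<omega>)\<^sup>2 \<partial>M) \<le> 4 * c\<^sup>2 * real n"
  proof -
    have "(\<integral>\<omega>. (\<Sum>l=1..n. U l \<omega>)\<^sup>2 \<partial>M) = (\<integral>\<omega>. (\<Sum>i=1..n. \<Sum>k=1..n. U i \<omega> * U k \<omega>) \<partial>M)"
      by (simp add: power2_eq_square sum_product)
    also have "\<dots> = (\<Sum>i=1..n. \<Sum>k=1..n. (\<integral>\<omega>. U i \<omega> * U k \<omega> \<partial>M))"
    proof -
      have "(\<integral>\<omega>. (\<Sum>i=1..n. \<Sum>k=1..n. U i \<omega> * U k \<omega>) \<partial>M) = (\<Sum>i=1..n. (\<integral>\<omega>. (\<Sum>k=1..n. U i \<omega> * U k \<omega>) \<partial>M))"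
      proof (rule Bochner_Integration.integral_sum)
        fix i assume "i \<in> {1..n}"
        then show "integrable M (\<lambda>\<omega>. \<Sum>k=1..n. U i \<omega> * U k \<omega>)"
          by (intro Bochner_Integration.integrable_sum int_UU) auto
      qed
      also have "\<dots> = (\<Sum>i=1..n. \<Sum>k=1..n. (\<integral>\<omega>. U i \<omega> * U k \<omega> \<partial>M))"
      proof (rule sum.cong[OF refl])
        fix i assume "i \<in> {1..n}"
        then show "(\<integral>\<omega>. (\<Sum>k=1..n. U i \<omega> * U k \<omega>) \<partial>M) = (\<Sum>k=1..n. (\<integral>\<omega>. U i \<omega> * U k \<omega> \<partial>M))"
          by (intro Bochner_Integration.integral_sum int_UU) auto
      qed
      finally show ?thesis .
    qed
    also have "\<dots> = (\<Sum>i=1..n. (\<integral>\<omega>. U i \<omega> * U i \<omega> \<partial>M))"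
    proof (rule sum.cong[OF refl])
      fix i assume i: "i \<in> {1..n}"
      have "(\<Sum>k=1..n. (\<integral>\<omega>. U i \<omega> * U k \<omega> \<partial>M)) = (\<Sum>k=1..n. if k = i then (\<integral>\<omega>. U i \<omega> * U i \<omega> \<partial>M) else 0)"
      proof (rule sum.cong[OF refl])
        fix k assume k: "k \<in> {1..n}"
        show "(\<integral>\<omega>. U i \<omega> * U k \<omega> \<partial>M) = (if k = i then (\<integral>\<omega>. U i \<omega> * U i \<omega> \<partial>M) else 0)"
        proof (cases "k = i")
          case False then show ?thesis using cross[of i k] i k by simp
        qed simp
      qed
      then show "(\<Sum>k=1..n. (\<integral>\<omega>. U i \<omega> * U k \<omega> \<partial>M)) = (\<integral>\<omega>. U i \<omega> * U i \<omega> \<partial>M)"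
        using i by simp
    qed
    also have "\<dots> \<le> (\<Sum>i=1..n. 4 * c\<^sup>2)"
    proof (rule sum_mono)
      fix i assume i: "i \<in> {1..n}"
      have "(\<integral>\<omega>. U i \<omega> * U i \<omega> \<partial>M) \<le> (\<integral>\<omega>. 4 * c\<^sup>2 \<partial>M)"
      proof (rule integral_mono)
        show "integrable M (\<lambda>\<omega>. U i \<omega> * U i \<omega>)" using int_UU i by simp
        fix \<omega>
        have "\<bar>U i \<omega>\<bar> * \<bar>U i \<omega>\<bar> \<le> 2 * c * (2 * c)" by (rule mult_mono) (use Ub c in auto)
        then show "U i \<omega> * U i \<omega> \<le> 4 * c\<^sup>2" by (simp add: power2_eq_square abs_mult[symmetric])
      qed simp
      then show "(\<integral>\<omega>. U i \<omega> * U i \<omega> \<partial>M) \<le> 4 * c\<^sup>2" by (simp add: prob_space)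
    qed
    finally show ?thesis by (simp add: algebra_simps)
  qed
  define a where "a = real n * \<eta>"
  have a0: "a > 0" unfolding a_def using n eta by simp
  define S2 where "S2 \<omega> = (\<Sum>l=1..n. U l \<omega>)\<^sup>2" for \<omega>
  define R where "R \<omega> = (\<Sum>l=1..n. \<bar>r (\<phi> (X l \<omega>))\<bar>)" for \<omega>
  define G where "G \<omega> = S2 \<omega> / (2 * a * real n) + R \<omega> / real n + (a\<^sup>2 / (2 * a * real n) + \<bar>\<mu>\<bar>)" for \<omega>
  have int_S2: "integrable M S2"
  proof -
    have "S2 = (\<lambda>\<omega>. \<Sum>i=1..n. \<Sum>k=1..n. U i \<omega> * U k \<omega>)"
      unfolding S2_def by (simp add: power2_eq_square sum_product fun_eq_iff)
    moreover have "integrable M (\<lambda>\<omega>. \<Sum>i=1..n. \<Sum>k=1..n. U i \<omega> * U k \<omega>)"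
      by (intro Bochner_Integration.integrable_sum int_UU) auto
    ultimately show ?thesis by simp
  qed
  have int_R: "integrable M R" unfolding R_def
    by (intro Bochner_Integration.integrable_sum integrable_abs int_r) auto
  have ER: "integral\<^sup>L M R = real n * t"
  proof -
    have "integral\<^sup>L M R = (\<Sum>l=1..n. (\<integral>\<omega>. \<bar>r (\<phi> (X l \<omega>))\<bar> \<partial>M))"
      unfolding R_def by (intro Bochner_Integration.integral_sum integrable_abs int_r) auto
    also have "\<dots> = (\<Sum>l=1..n. t)" by (intro sum.cong refl Et) auto
    finally show ?thesis by simp
  qed
  have EG: "integral\<^sup>L M G = integral\<^sup>L M S2 / (2 * a * real n) + integral\<^sup>L M R / real n + (a\<^sup>2 / (2 * a * real n) + \<bar>\<mu>\<bar>)"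
    unfolding G_def using int_S2 int_R by (simp add: prob_space)
  have int_G: "integrable M G" unfolding G_def using int_S2 int_R by simp
  have pw: "\<bar>wv \<phi> n (\<lambda>l. X l \<omega>)\<bar> \<le> G \<omega>" if "\<omega> \<in> space M" for \<omega>
  proof -
    have "(\<Sum>l=1..n. \<phi> (X l \<omega>)) = (\<Sum>l=1..n. U l \<omega>) + (\<Sum>l=1..n. r (\<phi> (X l \<omega>)) + \<mu>)"
      unfolding sum.distrib[symmetric] U_def
    proof (rule sum.cong[OF refl])
      fix l show "\<phi> (X l \<omega>) = (u (\<phi> (X l \<omega>)) - \<mu>) + (r (\<phi> (X l \<omega>)) + \<mu>)"
        using ur[of "\<phi> (X l \<omega>)"] by linarith
    qed
    then have "\<bar>\<Sum>l=1..n. \<phi> (X l \<omega>)\<bar> \<le> \<bar>\<Sum>l=1..n. U l \<omega>\<bar> + (\<Sum>l=1..n. \<bar>r (\<phi> (X l \<omega>)) + \<mu>\<bar>)"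
      using abs_triangle_ineq[of "\<Sum>l=1..n. U l \<omega>" "\<Sum>l=1..n. r (\<phi> (X l \<omega>)) + \<mu>"]
        sum_abs[of "\<lambda>l. r (\<phi> (X l \<omega>)) + \<mu>" "{1..n}"] by linarith
    also have "(\<Sum>l=1..n. \<bar>r (\<phi> (X l \<omega>)) + \<mu>\<bar>) \<le> (\<Sum>l=1..n. \<bar>r (\<phi> (X l \<omega>))\<bar> + \<bar>\<mu>\<bar>)"
      by (intro sum_mono abs_triangle_ineq)
    also have "\<dots> = R \<omega> + real n * \<bar>\<mu>\<bar>" unfolding R_def by (simp add: sum.distrib)
    also have "\<bar>\<Sum>l=1..n. U l \<omega>\<bar> \<le> (S2 \<omega> + a\<^sup>2) / (2 * a)" unfolding S2_def by (rule abs_le_sq[OF a0])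
    finally have "\<bar>\<Sum>l=1..n. \<phi> (X l \<omega>)\<bar> \<le> (S2 \<omega> + a\<^sup>2) / (2 * a) + (R \<omega> + real n * \<bar>\<mu>\<bar>)" by simp
    then have "\<bar>\<Sum>l=1..n. \<phi> (X l \<omega>)\<bar> / real n \<le> ((S2 \<omega> + a\<^sup>2) / (2 * a) + (R \<omega> + real n * \<bar>\<mu>\<bar>)) / real n"
      using n by (intro divide_right_mono) auto
    also have "\<dots> = G \<omega>" unfolding G_def using n a0 by (simp add: field_simps)
    finally show ?thesis unfolding wv_def by simp
  qed
  have "(\<integral>\<omega>. \<bar>wv \<phi> n (\<lambda>l. X l \<omega>)\<bar> \<partial>M) \<le> integral\<^sup>L M G"
  proof (rule integral_mono'[OF int_G])
    fix \<omega> assume \<omega>: "\<omega> \<in> space M"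
    show "\<bar>wv \<phi> n (\<lambda>l. X l \<omega>)\<bar> \<le> G \<omega>" by (rule pw[OF \<omega>])
    show "0 \<le> G \<omega>" using pw[OF \<omega>] abs_ge_zero[of "wv \<phi> n (\<lambda>l. X l \<omega>)"] by linarith
  qed
  also have "\<dots> \<le> 2 * c\<^sup>2 / (real n * \<eta>) + \<eta> / 2 + 2 * t"
  proof -
    have e1: "integral\<^sup>L M S2 / (2 * a * real n) \<le> 2 * c\<^sup>2 / (real n * \<eta>)"
    proof -
      have "integral\<^sup>L M S2 / (2 * a * real n) \<le> (4 * c\<^sup>2 * real n) / (2 * a * real n)"
        using sq a0 n unfolding S2_def by (intro divide_right_mono) auto
      also have "\<dots> = 2 * c\<^sup>2 / (real n * \<eta>)" unfolding a_def using n eta by (simp add: field_simps power2_eq_square)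
      finally show ?thesis .
    qed
    have e2: "a\<^sup>2 / (2 * a * real n) = \<eta> / 2" unfolding a_def using n eta by (simp add: field_simps power2_eq_square)
    have e3: "integral\<^sup>L M R / real n = t" unfolding ER using n by simp
    show ?thesis unfolding EG using e1 e2 e3 \<mu>t by linarith
  qed
  finally show ?thesis unfolding t_def r_def .
qed



lemma wlln:
  fixes X :: "nat \<Rightarrow> 'a \<Rightarrow> real" and \<phi> :: "real \<Rightarrow> real"
  assumes M: "prob_space M"
    and Xm: "\<And>j. j \<ge> 1 \<Longrightarrow> X j \<in> borel_measurable M"
    and ind: "prob_space.indep_vars M (\<lambda>_. borel) X {1..}"
    and dis: "\<And>j. j \<ge> 1 \<Longrightarrow> distr M borel (X j) = distr M borel (X 1)"
    and \<phi>m[measurable]: "\<phi> \<in> borel_measurable borel"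
    and int\<phi>: "\<And>j. j \<ge> 1 \<Longrightarrow> integrable M (\<lambda>\<omega>. \<phi> (X j \<omega>))"
    and mean: "\<And>j. j \<ge> 1 \<Longrightarrow> (\<integral>\<omega>. \<phi> (X j \<omega>) \<partial>M) = 0"
  shows "(\<lambda>n. (\<integral>\<omega>. \<bar>wv \<phi> n (\<lambda>l. X l \<omega>)\<bar> \<partial>M)) \<longlonglongrightarrow> 0"
proof -
  interpret prob_space M by (rule M)
  have X1[measurable]: "X 1 \<in> borel_measurable M" using Xm by simp
  define s where "s k \<omega> = \<bar>if \<bar>\<phi> (X 1 \<omega>)\<bar> \<le> real k then 0 else \<phi> (X 1 \<omega>)\<bar>" for k \<omega>
  define t where "t k = (\<integral>\<omega>. s k \<omega> \<partial>M)" for k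
  have t_lim: "t \<longlonglongrightarrow> 0"
  proof -
    have "(\<lambda>k. integral\<^sup>L M (s k)) \<longlonglongrightarrow> integral\<^sup>L M (\<lambda>_. 0::real)"
    proof (rule integral_dominated_convergence[where w="\<lambda>\<omega>. \<bar>\<phi> (X 1 \<omega>)\<bar>"])
      show "(\<lambda>_. 0::real) \<in> borel_measurable M" by simp
      show "s k \<in> borel_measurable M" for k unfolding s_def by measurable
      show "integrable M (\<lambda>\<omega>. \<bar>\<phi> (X 1 \<omega>)\<bar>)" using int\<phi>[of 1] by simp
      show "AE x in M. (\<lambda>k. s k x) \<longlonglongrightarrow> 0"
      proof (rule AE_I2)
        fix x
        have "eventually (\<lambda>k. s k x = 0) sequentially"
          unfolding eventually_sequentially s_def
        proof (rule exI[of _ "nat \<lceil>\<bar>\<phi> (X 1 x)\<bar>\<rceil>"], intro allI impI)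
          fix k assume "nat \<lceil>\<bar>\<phi> (X 1 x)\<bar>\<rceil> \<le> k"
          then have "\<bar>\<phi> (X 1 x)\<bar> \<le> real k" by linarith
          then show "\<bar>if \<bar>\<phi> (X 1 x)\<bar> \<le> real k then 0 else \<phi> (X 1 x)\<bar> = 0" by simp
        qed
        then show "(\<lambda>k. s k x) \<longlonglongrightarrow> 0" by (rule tendsto_eventually)
      qed
      show "AE x in M. norm (s k x) \<le> \<bar>\<phi> (X 1 x)\<bar>" for k unfolding s_def by auto
    qed
    then show ?thesis unfolding t_def by simp
  qed
  show ?thesis
  proof (rule LIMSEQ_I)
    fix e :: real assume e: "e > 0"
    have "eventually (\<lambda>k. t k < e / 6) sequentially"
      using order_tendstoD(2)[OF t_lim, of "e/6"] e by simp
    then obtain k where tk: "t k < e / 6" by (auto simp: eventually_sequentially)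
    define c where "c = real k"
    define N0 where "N0 = nat \<lceil>18 * c\<^sup>2 / e\<^sup>2\<rceil> + 1"
    show "\<exists>no. \<forall>n\<ge>no. norm ((\<integral>\<omega>. \<bar>wv \<phi> n (\<lambda>l. X l \<omega>)\<bar> \<partial>M) - 0) < e"
    proof (intro exI allI impI)
      fix n assume nN: "N0 \<le> n"
      have n1: "n \<ge> 1" using nN unfolding N0_def by simp
      have "18 * c\<^sup>2 / e\<^sup>2 < real n" using nN unfolding N0_def by linarith
      then have ne: "18 * c\<^sup>2 < real n * e\<^sup>2" using e by (simp add: field_simps)
      have b: "(\<integral>\<omega>. \<bar>wv \<phi> n (\<lambda>l. X l \<omega>)\<bar> \<partial>M) \<le> 2 * c\<^sup>2 / (real n * (e/3)) + (e/3) / 2 + 2 * t k"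
        using wlln_bound[OF M Xm ind dis \<phi>m int\<phi> mean, of c "e/3" n] e n1
        unfolding t_def s_def c_def by simp
      have "2 * c\<^sup>2 / (real n * (e/3)) < e / 3"
        using ne e n1 by (simp add: field_simps power2_eq_square)
      then have "(\<integral>\<omega>. \<bar>wv \<phi> n (\<lambda>l. X l \<omega>)\<bar> \<partial>M) < e" using b tk e by linarith
      then show "norm ((\<integral>\<omega>. \<bar>wv \<phi> n (\<lambda>l. X l \<omega>)\<bar> \<partial>M) - 0) < e" by simp
    qed
  qed
qed


theorem theorem1:
  fixes sv :: "nat \<Rightarrow> real" and M :: "'w measure" and Z :: "nat \<Rightarrow> 'w \<Rightarrow> real"
    and \<tau> :: real
  assumes sv_pos: "\<And>j. j \<ge> 1 \<Longrightarrow> sv j > 0"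
    and sv_mono: "\<And>i j. 1 \<le> i \<Longrightarrow> i \<le> j \<Longrightarrow> sv j \<le> sv i"
    and sv_lim: "sv \<longlonglongrightarrow> 0"
    and M: "prob_space M"
    and Z_meas: "\<And>j. j \<ge> 1 \<Longrightarrow> Z j \<in> borel_measurable M"
    and Z_indep: "prob_space.indep_vars M (\<lambda>_. borel) Z {1..}"
    and Z_distr: "\<And>j. j \<ge> 1 \<Longrightarrow> distr M borel (Z j) = distr M borel (Z 1)"
    and Z_sq_int: "\<And>j. j \<ge> 1 \<Longrightarrow> integrable M (\<lambda>\<omega>. (Z j \<omega>)\<^sup>2)"
    and Z_mean: "\<And>j. j \<ge> 1 \<Longrightarrow> (\<integral>\<omega>. Z j \<omega> \<partial>M) = 0"
    and Z_var: "\<And>j. j \<ge> 1 \<Longrightarrow> (\<integral>\<omega>. (Z j \<omega>)\<^sup>2 \<partial>M) = 1"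
    and tau: "\<tau> > 1"
  shows "(\<forall>\<kappa>::nat. \<kappa> \<ge> 3 \<longrightarrow>
           (\<forall>\<delta>::real. \<forall>a::nat \<Rightarrow> real.
              \<delta> > 0 \<longrightarrow> (\<lambda>j. (a j)\<^sup>2) summable_on {1..} \<longrightarrow> kpr sv a \<delta> \<ge> \<kappa> \<longrightarrow>
              measure M {\<omega> \<in> space M.
                  kdp \<tau> sv a \<delta> Z \<omega> < \<infinity> \<and>
                  err sv a \<delta> Z \<omega> (the_enat (kdp \<tau> sv a \<delta> Z \<omega>))
                    \<le> C_tau \<tau> * (INF k. err sv a \<delta> Z \<omega> k)}
                \<ge> rhs M Z \<tau> \<kappa>))
         \<and> (rhs M Z \<tau> \<longlonglongrightarrow> 1)"
proof -
  interpret P: prob_space M by (rule M)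
  define \<phi> where "\<phi> = (\<lambda>x::real. x\<^sup>2 - 1)"
  have \<phi>m[measurable]: "\<phi> \<in> borel_measurable borel" unfolding \<phi>_def by measurable
  have int\<phi>: "integrable M (\<lambda>\<omega>. \<phi> (Z j \<omega>))" if "j \<ge> 1" for j
    unfolding \<phi>_def using Z_sq_int[OF that] by simp
  have mean\<phi>: "(\<integral>\<omega>. \<phi> (Z j \<omega>) \<partial>M) = 0" if "j \<ge> 1" for j
    unfolding \<phi>_def using Z_sq_int[OF that] Z_var[OF that] by (simp add: P.prob_space)
  define I where "I \<kappa> = (\<integral>\<omega>. \<bar>(1 / real \<kappa>) * (\<Sum>j=1..nat \<lceil>real \<kappa> / 3\<rceil>. ((Z j \<omega>)\<^sup>2 - 1))\<bar> \<partial>M)" for \<kappa> :: nat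
  define W where "W n = (\<integral>\<omega>. \<bar>wv \<phi> n (\<lambda>l. Z l \<omega>)\<bar> \<partial>M)" for n
  define c where "c = max (12 / (\<tau>\<^sup>2 + 2 * \<tau> - 3)) 9"
  have rhs_eq: "rhs M Z \<tau> \<kappa> = 1 - c * I \<kappa>" for \<kappa> unfolding rhs_def I_def c_def ..
  have wv_eq: "wv \<phi> m (\<lambda>l. Z l \<omega>) = (\<Sum>j=1..m. ((Z j \<omega>)\<^sup>2 - 1)) / real m" for m \<omega>
    unfolding wv_def \<phi>_def ..
  have I_eq: "I \<kappa> = real (nat \<lceil>real \<kappa> / 3\<rceil>) / real \<kappa> * W (nat \<lceil>real \<kappa> / 3\<rceil>)" if "\<kappa> \<ge> 1" for \<kappa>
  proof -
    define n where "n = nat \<lceil>real \<kappa> / 3\<rceil>"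
    have n1: "n \<ge> 1" unfolding n_def using that by linarith
    have pw: "\<bar>(1 / real \<kappa>) * (\<Sum>j=1..n. ((Z j \<omega>)\<^sup>2 - 1))\<bar> = real n / real \<kappa> * \<bar>wv \<phi> n (\<lambda>l. Z l \<omega>)\<bar>" for \<omega>
      unfolding wv_eq using n1 that by (simp add: abs_mult abs_divide)
    show ?thesis unfolding I_def W_def n_def[symmetric] pw by simp
  qed
  have W0: "W n \<ge> 0" for n unfolding W_def by simp
  have part1: "\<forall>\<kappa>::nat. \<kappa> \<ge> 3 \<longrightarrow>
           (\<forall>\<delta>::real. \<forall>a::nat \<Rightarrow> real.
              \<delta> > 0 \<longrightarrow> (\<lambda>j. (a j)\<^sup>2) summable_on {1..} \<longrightarrow> kpr sv a \<delta> \<ge> \<kappa> \<longrightarrow>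
              measure M {\<omega> \<in> space M.
                  kdp \<tau> sv a \<delta> Z \<omega> < \<infinity> \<and>
                  err sv a \<delta> Z \<omega> (the_enat (kdp \<tau> sv a \<delta> Z \<omega>))
                    \<le> C_tau \<tau> * (INF k. err sv a \<delta> Z \<omega> k)}
                \<ge> rhs M Z \<tau> \<kappa>)"
  proof (intro allI impI)
    fix \<kappa> :: nat and \<delta> :: real and a :: "nat \<Rightarrow> real"
    assume k3: "\<kappa> \<ge> 3" and dpos: "\<delta> > 0" and asum: "(\<lambda>j. (a j)\<^sup>2) summable_on {1..}"
      and kb: "kpr sv a \<delta> \<ge> \<kappa>"
    define n where "n = nat \<lceil>real \<kappa> / 3\<rceil>"
    have n1: "n \<ge> 1" unfolding n_def using k3 by linarith
    have nk: "real \<kappa> / real n \<le> 3"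
    proof -
      have "real \<kappa> / 3 \<le> real n" unfolding n_def by linarith
      then show ?thesis using n1 by (simp add: field_simps)
    qed
    define q where "q = (\<tau>\<^sup>2 + 2 * \<tau> - 3) / 4"
    have q0: "q > 0"
    proof -
      have "\<tau>\<^sup>2 + 2 * \<tau> - 3 = (\<tau> - 1) * (\<tau> + 3)" by (simp add: power2_eq_square algebra_simps)
      also have "\<dots> > 0" using tau by simp
      finally show ?thesis unfolding q_def by simp
    qed
    define e where "e = min (1/3) q"
    have e0: "0 < e" "e \<le> 1/3" "e \<le> (\<tau>\<^sup>2+2*\<tau>-3)/4" unfolding e_def q_def[symmetric] using q0 by auto
    have ce: "3 / e = c"
    proof (cases "1/3 \<le> q")
      case True
      then have e13: "e = 1/3" unfolding e_def by simp
      have le: "12 / (\<tau>\<^sup>2 + 2 * \<tau> - 3) \<le> 9"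
        using True q0 unfolding q_def by (simp add: field_simps)
      show ?thesis unfolding c_def e13 using le by (simp add: max_def)
    next
      case False
      then have eq: "e = q" unfolding e_def by simp
      have gt: "12 / (\<tau>\<^sup>2 + 2 * \<tau> - 3) > 9"
        using False q0 unfolding q_def by (simp add: field_simps)
      have "3 / q = 12 / (\<tau>\<^sup>2 + 2 * \<tau> - 3)" unfolding q_def by simp
      then show ?thesis unfolding c_def eq using gt by (simp add: max_def)
    qed
    have s: "(\<lambda>j. (ydag sv a j)\<^sup>2) summable_on {1..}" by (rule ydag_summable[OF sv_pos sv_mono asum])
    define B where "B = {\<omega> \<in> space M. \<exists>m\<ge>n. e < \<bar>wv \<phi> m (\<lambda>l. Z l \<omega>)\<bar>}"
    define Ev where "Ev = {\<omega> \<in> space M.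
                  kdp \<tau> sv a \<delta> Z \<omega> < \<infinity> \<and>
                  err sv a \<delta> Z \<omega> (the_enat (kdp \<tau> sv a \<delta> Z \<omega>))
                    \<le> C_tau \<tau> * (INF k. err sv a \<delta> Z \<omega> k)}"
    have Ev_sets: "Ev \<in> sets M" unfolding Ev_def by (rule event_sets[OF sv_pos s Z_meas])
    have [measurable]: "(\<lambda>\<omega>. wv \<phi> m (\<lambda>l. Z l \<omega>)) \<in> borel_measurable M" for m
      by (rule wvX_meas[OF Z_meas \<phi>m])
    have B_sets: "B \<in> sets M" unfolding B_def by measurable
    have sub: "space M - B \<subseteq> Ev"
    proof
      fix \<omega> assume \<omega>: "\<omega> \<in> space M - B"
      have good: "\<bar>(\<Sum>j=1..m. (Z j \<omega>)\<^sup>2) - real m\<bar> \<le> e * real m" if m: "m \<ge> nat \<lceil>real \<kappa> / 3\<rceil>" for m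
      proof -
        have mn: "m \<ge> n" using m unfolding n_def .
        then have m1: "m \<ge> 1" using n1 by simp
        have "\<bar>wv \<phi> m (\<lambda>l. Z l \<omega>)\<bar> \<le> e" using \<omega> mn unfolding B_def by auto
        moreover have "wv \<phi> m (\<lambda>l. Z l \<omega>) = ((\<Sum>j=1..m. (Z j \<omega>)\<^sup>2) - real m) / real m"
          unfolding wv_eq by (simp add: sum_subtractf)
        ultimately have "\<bar>(\<Sum>j=1..m. (Z j \<omega>)\<^sup>2) - real m\<bar> / real m \<le> e" by (simp add: abs_divide)
        then show ?thesis using m1 by (simp add: field_simps)
      qed
      have "kdp \<tau> sv a \<delta> Z \<omega> < \<infinity> \<and>
         err sv a \<delta> Z \<omega> (the_enat (kdp \<tau> sv a \<delta> Z \<omega>)) \<le> C_tau \<tau> * (INF k. err sv a \<delta> Z \<omega> k)"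
        by (rule det_main[where Z=Z and \<omega>=\<omega>, OF sv_pos s tau dpos kb k3 e0 good])
      then show "\<omega> \<in> Ev" using \<omega> unfolding Ev_def by auto
    qed
    have eB: "e * measure M B \<le> W n"
      unfolding B_def W_def by (rule maxinf[OF M Z_meas Z_indep Z_distr \<phi>m int\<phi> n1 e0(1)])
    have WI: "W n = real \<kappa> / real n * I \<kappa>"
      using I_eq[of \<kappa>] k3 n1 unfolding n_def[symmetric] by (simp add: field_simps)
    have I0: "I \<kappa> \<ge> 0" unfolding I_def by simp
    have "W n \<le> 3 * I \<kappa>" unfolding WI using nk I0 by (intro mult_right_mono) auto
    then have "measure M B \<le> 3 * I \<kappa> / e" using eB e0 by (simp add: field_simps)
    also have "\<dots> = c * I \<kappa>" using ce by (metis times_divide_eq_left mult.commute)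
    finally have PB: "measure M B \<le> c * I \<kappa>" .
    have "measure M (space M - B) = 1 - measure M B"
      using P.finite_measure_compl[OF B_sets] by (simp add: P.prob_space)
    moreover have "measure M (space M - B) \<le> measure M Ev" by (rule P.finite_measure_mono[OF sub Ev_sets])
    ultimately have "measure M Ev \<ge> 1 - c * I \<kappa>" using PB by linarith
    then show "measure M Ev \<ge> rhs M Z \<tau> \<kappa>" unfolding rhs_eq .
  qed
  have part2: "rhs M Z \<tau> \<longlonglongrightarrow> 1"
  proof -
    have Wl: "W \<longlonglongrightarrow> 0" unfolding W_def
      by (rule wlln[OF M Z_meas Z_indep Z_distr \<phi>m int\<phi> mean\<phi>])
    have nlim: "filterlim (\<lambda>\<kappa>::nat. nat \<lceil>real \<kappa> / 3\<rceil>) at_top sequentially"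
      unfolding filterlim_at_top
    proof
      fix N :: nat
      show "eventually (\<lambda>\<kappa>::nat. N \<le> nat \<lceil>real \<kappa> / 3\<rceil>) sequentially"
        unfolding eventually_sequentially by (rule exI[of _ "3 * N"]) linarith
    qed
    have Wl2: "(\<lambda>\<kappa>. W (nat \<lceil>real \<kappa> / 3\<rceil>)) \<longlonglongrightarrow> 0" by (rule filterlim_compose[OF Wl nlim])
    have Il: "I \<longlonglongrightarrow> 0"
    proof (rule tendsto_sandwich[OF _ _ tendsto_const Wl2])
      show "eventually (\<lambda>\<kappa>. 0 \<le> I \<kappa>) sequentially" unfolding I_def by simp
      show "eventually (\<lambda>\<kappa>. I \<kappa> \<le> W (nat \<lceil>real \<kappa> / 3\<rceil>)) sequentially"
        unfolding eventually_sequentially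
      proof (intro exI allI impI)
        fix \<kappa> :: nat assume k: "1 \<le> \<kappa>"
        have "\<lceil>real \<kappa> / 3\<rceil> \<le> int \<kappa>" by (simp add: ceiling_le_iff)
        then have "nat \<lceil>real \<kappa> / 3\<rceil> \<le> \<kappa>" by linarith
        then have "real (nat \<lceil>real \<kappa> / 3\<rceil>) \<le> real \<kappa>" by linarith
        then have "real (nat \<lceil>real \<kappa> / 3\<rceil>) / real \<kappa> \<le> 1" using k by simp
        then have "real (nat \<lceil>real \<kappa> / 3\<rceil>) / real \<kappa> * W (nat \<lceil>real \<kappa> / 3\<rceil>) \<le> W (nat \<lceil>real \<kappa> / 3\<rceil>)"
          by (intro mult_left_le_one_le W0) auto
        then show "I \<kappa> \<le> W (nat \<lceil>real \<kappa> / 3\<rceil>)" unfolding I_eq[OF k] .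
      qed
    qed
    have "(\<lambda>\<kappa>. 1 - c * I \<kappa>) \<longlonglongrightarrow> 1 - c * 0" by (intro tendsto_intros Il)
    then show ?thesis unfolding rhs_eq by simp
  qed
  show ?thesis using part1 part2 by blast
qed

end
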